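(* Let $p\in\mathbb{N}$, $0\le\gamma_1<\dots<\gamma_p\le1$, $\boldsymbol\alpha=(\alpha_1,\dots,\alpha_p)\in(0,1)^p$ with $\sum_i\alpha_i=1$, and for each $i$ let $(\gamma_{i,n})_n$ be $[0,1]$-valued with $|\gamma_{i,n}-\gamma_i|=O(1/n)$. Define $\phi_{n,\boldsymbol\alpha,\boldsymbol\gamma_n}(u)=\sum_{i=1}^p\alpha_i\phi_{n,\gamma_{i,n}}(u)$, $u\in[0,1]$. Let $F_X,F_Y$ be continuous, strictly increasing cdfs with finite second moments, and let $X_{n,\boldsymbol\alpha,\boldsymbol\gamma_n}$, $Y_{n,\boldsymbol\alpha,\boldsymbol\gamma_n}$ have cdfs $\phi_{n,\boldsymbol\alpha,\boldsymbol\gamma_n}\circ F_X=\sum_i\alpha_iF_{X_{1+[(n-1)\gamma_{i,n}]:n}}$ and $\phi_{n,\boldsymbol\alpha,\boldsymbol\gamma_n}\circ F_Y$ respectively (mixtures of order statistics of samples of size $n$ from $F_X$, resp. $F_Y$). Suppose there are $\delta_1,\dots,\delta_p>0$, with the sets $(\gamma_i-\delta_i,\gamma_i+\delta_i)\cap[0,1]$ pairwise disjoint, such that: for each $i$, if $\gamma_i-\delta_i\le a<b<\gamma_i$ or $\gamma_i<b<a\le\gamma_i+\delta_i$ then $\phi_{n,\boldsymbol\alpha,\boldsymbol\gamma_n}'(a)/\phi_{n,\boldsymbol\alpha,\boldsymbol\gamma_n}'(b)\to0$ as $n\to\infty$; and for every $i$, (A1) $\max\{F_X(c_{\gamma_i}),\gamma_i-\delta_i\}<F_X(a_{\gamma_i})$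 whenever $A_2\cap(0,\gamma_i)\neq\emptyset$; (A2) $F_X(b_{\gamma_i})<\min\{F_X(d_{\gamma_i}),\gamma_i+\delta_i\}$ whenever $A_2\cap(\gamma_i,1)\neq\emptyset$. Then $X_{n,\boldsymbol\alpha,\boldsymbol\gamma_n}\le_{\textnormal{d-ast}}Y_{n,\boldsymbol\alpha,\boldsymbol\gamma_n}$ as $n\to\infty$.
   Context: $[x]$ denotes the integer part. For $n\ge2$, $\alpha\in[0,1]$, $t\in[0,1]$: $\phi_{n,\alpha}(t)=\sum_{j=1+[(n-1)\alpha]}^n\binom{n}{j}t^j(1-t)^{n-j}$; the cdf of the $(1+[(n-1)\alpha])$-th smallest order statistic $X_{1+[(n-1)\alpha]:n}$ of an i.i.d. sample of size $n$ from $F_X$ is $\phi_{n,\alpha}\circ F_X$. For a cdf $F$, $F^{-1}(u)=\inf\{x:F(x)\ge u\}$. $\mathcal{W}_2(F,G)=(\int_0^1(F^{-1}-G^{-1})^2du)^{1/2}$; $\varepsilon_{\mathcal{W}_2}(F,G)=\mathcal{W}_2^{-2}(F,G)\int_{\{u:F^{-1}(u)>G^{-1}(u)\}}(F^{-1}-G^{-1})^2du$ (set to $0$ if $\mathcal{W}_2(F,G)=0$). $X_n\le_{\textnormal{d-ast}}Y_n$ means $\varepsilon_{\mathcal{W}_2}(F_{X_n},F_{Y_n})\to0$. $A_2=\{u\in(0,1):F_X^{-1}(u)\ne F_Y^{-1}(u)\}$, $B_0=\{x:F_X(x)<F_Y(x)\}$, $B_2=\{x:F_X(x)\neq F_Y(x)\}$;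 $c_\gamma=\sup(B_0\cap(-\infty,F_X^{-1}(\gamma)))$, $d_\gamma=\inf(B_0\cap(F_X^{-1}(\gamma),\infty))$, $a_\gamma=\sup(B_2\cap(-\infty,F_X^{-1}(\gamma)))$, $b_\gamma=\inf(B_2\cap(F_X^{-1}(\gamma),\infty))$, with $\sup\emptyset=-\infty$, $\inf\emptyset=+\infty$, $F_X(\mp\infty)=0,1$. *)

theory Defs
  imports "HOL-Analysis.Analysis" "HOL-Library.Landau_Symbols"
begin

definition phi :: "nat \<Rightarrow> real \<Rightarrow> real \<Rightarrow> real" where
  "phi n a t = (\<Sum>j = 1 + nat \<lfloor>real (n - 1) * a\<rfloor> .. n.
       real (n choose j) * t ^ j * (1 - t) ^ (n - j))"

(* generalized inverse F^{-1}(u) = inf {x. F x >= u}, real-valued version (used for u in (0,1)) *)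
definition qinv :: "(real \<Rightarrow> real) \<Rightarrow> real \<Rightarrow> real" where
  "qinv F u = Inf {x. u \<le> F x}"

(* extended-real version, with inf of empty set = +infinity, unbounded below = -infinity *)
definition qinv_e :: "(real \<Rightarrow> real) \<Rightarrow> real \<Rightarrow> ereal" where
  "qinv_e F u = Inf (ereal ` {x. u \<le> F x})"

definition Fext :: "(real \<Rightarrow> real) \<Rightarrow> ereal \<Rightarrow> real" where
  "Fext F x = (if x = -\<infinity> then 0 else if x = \<infinity> then 1 else F (real_of_ereal x))"

definition is_cdf :: "(real \<Rightarrow> real) \<Rightarrow> bool" where
  "is_cdf F \<longleftrightarrow> mono F \<and> (\<forall>x. continuous (at_right x) F) \<and>
     (F \<longlongrightarrow> 0) at_bot \<and> (F \<longlongrightarrow> 1) at_top"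

definition W2 :: "(real \<Rightarrow> real) \<Rightarrow> (real \<Rightarrow> real) \<Rightarrow> real" where
  "W2 F G = sqrt (LINT u:{0<..<1::real}|lborel. (qinv F u - qinv G u)\<^sup>2)"

definition epsW2 :: "(real \<Rightarrow> real) \<Rightarrow> (real \<Rightarrow> real) \<Rightarrow> real" where
  "epsW2 F G = (if W2 F G = 0 then 0 else
     (LINT u:{u\<in>{0<..<1::real}. qinv F u > qinv G u}|lborel. (qinv F u - qinv G u)\<^sup>2)
       / (W2 F G)\<^sup>2)"

definition A2set :: "(real \<Rightarrow> real) \<Rightarrow> (real \<Rightarrow> real) \<Rightarrow> real set" where
  "A2set FX FY = {u\<in>{0<..<1}. qinv FX u \<noteq> qinv FY u}"

definition B0set :: "(real \<Rightarrow> real) \<Rightarrow> (real \<Rightarrow> real) \<Rightarrow> real set" where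
  "B0set FX FY = {x. FX x < FY x}"

definition B2set :: "(real \<Rightarrow> real) \<Rightarrow> (real \<Rightarrow> real) \<Rightarrow> real set" where
  "B2set FX FY = {x. FX x \<noteq> FY x}"

definition c_pt :: "(real \<Rightarrow> real) \<Rightarrow> (real \<Rightarrow> real) \<Rightarrow> real \<Rightarrow> ereal" where
  "c_pt FX FY g = Sup (ereal ` B0set FX FY \<inter> {..< qinv_e FX g})"

definition d_pt :: "(real \<Rightarrow> real) \<Rightarrow> (real \<Rightarrow> real) \<Rightarrow> real \<Rightarrow> ereal" where
  "d_pt FX FY g = Inf (ereal ` B0set FX FY \<inter> {qinv_e FX g <..})"

definition a_pt :: "(real \<Rightarrow> real) \<Rightarrow> (real \<Rightarrow> real) \<Rightarrow> real \<Rightarrow> ereal" where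
  "a_pt FX FY g = Sup (ereal ` B2set FX FY \<inter> {..< qinv_e FX g})"

definition b_pt :: "(real \<Rightarrow> real) \<Rightarrow> (real \<Rightarrow> real) \<Rightarrow> real \<Rightarrow> ereal" where
  "b_pt FX FY g = Inf (ereal ` B2set FX FY \<inter> {qinv_e FX g <..})"

end

theory Submission
  imports Defs "HOL-Probability.Probability"
begin


definition nice :: "(real \<Rightarrow> real) \<Rightarrow> bool" where
  "nice F \<longleftrightarrow> continuous_on UNIV F \<and> strict_mono F \<and> (F \<longlongrightarrow> 0) at_bot \<and> (F \<longlongrightarrow> 1) at_top"

lemma nice_mono: "nice F \<Longrightarrow> x \<le> y \<Longrightarrow> F x \<le> F y"
  unfolding nice_def by (meson strict_mono_mono monoD)

lemma nice_less: "nice F \<Longrightarrow> x < y \<Longrightarrow> F x < F y"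
  unfolding nice_def by (simp add: strict_mono_def)

lemma nice_less_iff: "nice F \<Longrightarrow> F x < F y \<longleftrightarrow> x < y"
  using nice_less[of F x y] nice_mono[of F y x] by (auto simp: not_less[symmetric])

lemma nice_le_iff: "nice F \<Longrightarrow> F x \<le> F y \<longleftrightarrow> x \<le> y"
  using nice_less_iff[of F y x] by (simp add: not_less[symmetric])

lemma nice_ge0: "nice F \<Longrightarrow> 0 \<le> F x"
proof -
  assume n: "nice F"
  hence "(F \<longlongrightarrow> 0) at_bot" unfolding nice_def by auto
  thus ?thesis
    by (rule tendsto_upperbound) (auto simp: eventually_at_bot_linorder intro!: exI[of _ x] nice_mono[OF n])
qed

lemma nice_le1: "nice F \<Longrightarrow> F x \<le> 1"
proof -
  assume n: "nice F"
  hence "(F \<longlongrightarrow> 1) at_top" unfolding nice_def by auto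
  thus ?thesis
    by (rule tendsto_lowerbound) (auto simp: eventually_at_top_linorder intro!: exI[of _ x] nice_mono[OF n])
qed

lemma nice_pos: "nice F \<Longrightarrow> 0 < F x"
  using nice_ge0[of F "x - 1"] nice_less[of F "x - 1" x] by auto

lemma nice_lt1: "nice F \<Longrightarrow> F x < 1"
  using nice_le1[of F "x + 1"] nice_less[of F x "x + 1"] by auto

lemma nice_surj:
  assumes n: "nice F" and u: "0 < u" "u < 1"
  shows "\<exists>x. F x = u"
proof -
  have b: "(F \<longlongrightarrow> 0) at_bot" and t: "(F \<longlongrightarrow> 1) at_top" and c: "continuous_on UNIV F"
    using n unfolding nice_def by auto
  have "eventually (\<lambda>x. F x < u) at_bot" using order_tendstoD(2)[OF b] u by auto
  then obtain a where a: "F a < u" by (auto simp: eventually_at_bot_linorder)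
  have "eventually (\<lambda>x. F x > u) at_top" using order_tendstoD(1)[OF t] u by auto
  then obtain b0 where b0: "\<forall>x\<ge>b0. F x > u" by (auto simp: eventually_at_top_linorder)
  define b where "b = max a b0"
  have fb: "F b > u" using b0 b_def by auto
  have "a \<le> b" by (simp add: b_def)
  have "continuous_on {a..b} F" using c by (rule continuous_on_subset) auto
  from IVT'[of F a u b, OF _ _ \<open>a \<le> b\<close> this] a fb show ?thesis by auto
qed

lemma nice_qinv_eq:
  assumes n: "nice F" and "F x = u"
  shows "qinv F u = x"
proof -
  have "{y. u \<le> F y} = {x..}" using assms nice_le_iff[OF n] by auto
  thus ?thesis unfolding qinv_def by simp
qed

lemma nice_qinv_F: "nice F \<Longrightarrow> qinv F (F x) = x"
  by (rule nice_qinv_eq) auto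

lemma nice_F_qinv:
  assumes n: "nice F" and u: "0 < u" "u < 1"
  shows "F (qinv F u) = u"
  using nice_surj[OF assms] nice_qinv_eq[OF n] by force

lemma nice_qinv_mono:
  assumes n: "nice F" and "0 < u" "u \<le> v" "v < 1"
  shows "qinv F u \<le> qinv F v"
proof -
  have "F (qinv F u) \<le> F (qinv F v)" using nice_F_qinv[OF n, of u] nice_F_qinv[OF n, of v] assms by simp
  thus ?thesis using nice_le_iff[OF n] by blast
qed

lemma nice_qinv_less_iff:
  assumes n: "nice F" and "0 < u" "u < 1" 
  shows "qinv F u < x \<longleftrightarrow> u < F x"
  using nice_F_qinv[OF n, of u] assms nice_less_iff[OF n, of "qinv F u" x] by simp

lemma nice_qinv_le_iff:
  assumes n: "nice F" and "0 < u" "u < 1" 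
  shows "qinv F u \<le> x \<longleftrightarrow> u \<le> F x"
  using nice_F_qinv[OF n, of u] assms nice_le_iff[OF n, of "qinv F u" x] by simp

lemma nice_qinv_measurable:
  assumes n: "nice F"
  shows "(\<lambda>u. if u \<in> {0<..<1} then qinv F u else 0) \<in> borel_measurable borel"
proof -
  have "mono_on {0<..<1} (qinv F)"
    by (auto intro!: mono_onI nice_qinv_mono[OF n])
  hence "qinv F \<in> borel_measurable (restrict_space borel {0<..<1})"
    by (rule borel_measurable_mono_on_fnc)
  thus ?thesis by (subst (asm) measurable_restrict_space_iff) auto
qed



lemma nice_moment:
  assumes n: "nice F" and mom: "integrable (interval_measure F) (\<lambda>x. x\<^sup>2)"
  shows "(\<integral>\<^sup>+u. ennreal (indicator {0<..<1} u * (qinv F u)\<^sup>2) \<partial>lborel) < \<infinity>"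
proof -
  define Qe where "Qe u = (if u \<in> {0<..<1} then qinv F u else 0)" for u
  have Qm[measurable]: "Qe \<in> borel_measurable borel" unfolding Qe_def by (rule nice_qinv_measurable[OF n])
  define R where "R = restrict_space lborel ({0<..<1}::real set)"
  have Rsp: "space R = {0<..<1}" unfolding R_def by (simp add: space_restrict_space)
  have QmR: "Qe \<in> measurable R borel" unfolding R_def
    by (rule measurable_restrict_space1) simp
  define N where "N = distr R borel Qe"
  have "prob_space R"
    by (rule prob_spaceI) (simp add: R_def Rsp emeasure_restrict_space)
  then have pN: "prob_space N" unfolding N_def using QmR by (rule prob_space.prob_space_distr)
  have rdN: "real_distribution N" unfolding real_distribution_def real_distribution_axioms_def
    using pN by (simp add: N_def)
  have mono: "\<And>x y. x \<le> y \<Longrightarrow> F x \<le> F y" using nice_mono[OF n] .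
  have rc: "\<And>a. continuous (at_right a) F"
    using n unfolding nice_def by (auto simp: continuous_on_eq_continuous_within intro: continuous_at_imp_continuous_at_within)
  have lb: "(F \<longlongrightarrow> 0) at_bot" and lt: "(F \<longlongrightarrow> 1) at_top" using n unfolding nice_def by auto
  have rdI: "real_distribution (interval_measure F)"
    by (rule real_distribution_interval_measure[OF mono rc lb lt])
  have "cdf N x = F x" for x
  proof -
    have "Qe -` {..x} \<inter> space R = {0<..F x}"
      using nice_qinv_le_iff[OF n] nice_lt1[OF n, of x] nice_pos[OF n, of x]
      by (auto simp: Rsp Qe_def)
    hence "cdf N x = measure R {0<..F x}"
      unfolding cdf_def N_def using QmR by (simp add: measure_distr)
    also have "\<dots> = measure lborel {0<..F x}"
      unfolding R_def using nice_lt1[OF n, of x]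
      by (subst measure_restrict_space) auto
    also have "\<dots> = F x" using nice_pos[OF n, of x] by simp
    finally show ?thesis .
  qed
  moreover have "cdf (interval_measure F) x = F x" for x
    unfolding cdf_def by (rule measure_interval_measure_Iic[OF mono rc lb])
  ultimately have NI: "N = interval_measure F"
    by (intro cdf_unique[OF rdN rdI]) auto
  have "(\<integral>\<^sup>+x. ennreal (norm (x\<^sup>2)) \<partial>interval_measure F) < \<infinity>"
    using integrableD(2)[OF mom] by (simp add: top.not_eq_extremum)
  also have "(\<integral>\<^sup>+x. ennreal (norm (x\<^sup>2)) \<partial>interval_measure F) = (\<integral>\<^sup>+x. ennreal ((Qe x)\<^sup>2) \<partial>R)"
    unfolding NI[symmetric] N_def using QmR by (subst nn_integral_distr) auto
  also have "\<dots> = (\<integral>\<^sup>+x. ennreal ((Qe x)\<^sup>2) * indicator {0<..<1} x \<partial>lborel)"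
    unfolding R_def by (subst nn_integral_restrict_space) auto
  also have "\<dots> = (\<integral>\<^sup>+u. ennreal (indicator {0<..<1} u * (qinv F u)\<^sup>2) \<partial>lborel)"
    by (intro nn_integral_cong) (auto simp: Qe_def indicator_def)
  finally show ?thesis .
qed



lemma tail_deriv:
  assumes "1 \<le> k" "k \<le> n"
  shows "((\<lambda>t. \<Sum>j=k..n. real (n choose j) * t ^ j * (1 - t) ^ (n - j)) has_real_derivative
          (real n * real ((n - 1) choose (k - 1)) * t ^ (k - 1) * (1 - t) ^ (n - k))) (at t)"
  using assms(2,1)
proof (induction k rule: inc_induct)
  case base
  have e: "(\<lambda>t. \<Sum>j=n..n. real (n choose j) * t ^ j * (1 - t) ^ (n - j)) = (\<lambda>t. t ^ n)" by simp
  show ?case unfolding e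
    by (rule derivative_eq_intros refl)+ simp
next
  case (step m)
  obtain s where s: "m = Suc s" using step(4) by (cases m) auto
  obtain r where r: "n - m = Suc r" using step(2) by (metis Suc_diff_Suc)
  have nsm: "n - Suc m = r" using r by simp
  have IH: "((\<lambda>t. \<Sum>j=Suc m..n. real (n choose j) * t ^ j * (1 - t) ^ (n - j)) has_real_derivative
          (real n * real ((n - 1) choose m) * t ^ m * (1 - t) ^ r)) (at t)"
    using step(3) nsm by simp
  have split: "(\<lambda>t. \<Sum>j=m..n. real (n choose j) * t ^ j * (1 - t) ^ (n - j)) =
     (\<lambda>t. real (n choose m) * t ^ m * (1 - t) ^ (n - m) + (\<Sum>j=Suc m..n. real (n choose j) * t ^ j * (1 - t) ^ (n - j)))"
    using step(2) by (intro ext) (simp add: sum.atLeast_Suc_atMost)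
  have d1: "((\<lambda>t. real (n choose m) * t ^ m * (1 - t) ^ (n - m)) has_real_derivative
      real (n choose m) * (real m * t ^ s * (1 - t) ^ (n - m) - t ^ m * (real (Suc r) * (1 - t) ^ r))) (at t)"
  proof -
    have rs: "n - Suc s = Suc r" "n - Suc (Suc s) = r" using r s by auto
    show ?thesis unfolding r s by (rule derivative_eq_intros refl)+ (simp add: algebra_simps rs)
  qed
  have c1: "real m * real (n choose m) = real n * real ((n - 1) choose (m - 1))"
    using times_binomial_minus1_eq[of m n] step(4) by (simp flip: of_nat_mult)
  have c2: "real (Suc r) * real (n choose m) = real n * real ((n - 1) choose m)"
  proof -
    have "Suc r * (n choose m) = n * ((n - 1) choose m)" using binomial_absorb_comp[of n m] r by simp
    hence "real (Suc r * (n choose m)) = real (n * ((n - 1) choose m))" by (rule arg_cong)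
    thus ?thesis by (simp only: of_nat_mult)
  qed
  have "real (n choose m) * (real m * t ^ s * (1 - t) ^ (n - m) - t ^ m * (real (Suc r) * (1 - t) ^ r))
        + real n * real ((n - 1) choose m) * t ^ m * (1 - t) ^ r
      = (real m * real (n choose m)) * t ^ s * (1 - t) ^ (n - m)
        - (real (Suc r) * real (n choose m)) * t ^ m * (1 - t) ^ r
        + real n * real ((n - 1) choose m) * t ^ m * (1 - t) ^ r" by (simp add: algebra_simps)
  also have "\<dots> = real n * real ((n - 1) choose (m - 1)) * t ^ (m - 1) * (1 - t) ^ (n - m)"
    unfolding c1 c2 using s by simp
  finally have eq: "real (n choose m) * (real m * t ^ s * (1 - t) ^ (n - m) - t ^ m * (real (Suc r) * (1 - t) ^ r))
        + real n * real ((n - 1) choose m) * t ^ m * (1 - t) ^ r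
      = real n * real ((n - 1) choose (m - 1)) * t ^ (m - 1) * (1 - t) ^ (n - m)" .
  show ?case unfolding split
    using DERIV_add[OF d1 IH] eq by simp
qed



definition EE :: "nat \<Rightarrow> nat \<Rightarrow> real \<Rightarrow> real" where
  "EE p q t = t ^ p * (1 - t) ^ q"

lemma EE_nonneg: "0 \<le> t \<Longrightarrow> t \<le> 1 \<Longrightarrow> 0 \<le> EE p q t"
  unfolding EE_def by simp

lemma EE_pos: "0 < t \<Longrightarrow> t < 1 \<Longrightarrow> 0 < EE p q t"
  unfolding EE_def by simp

lemma EE_refl: "EE p q (1 - t) = EE q p t"
  unfolding EE_def by simp

lemma EE_mono:
  assumes p: "1 \<le> p" and v: "0 \<le> v" "v \<le> w" and w: "w * real (p + q) \<le> real p"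
  shows "EE p q v \<le> EE p q w"
proof (cases "q = 0")
  case True
  thus ?thesis unfolding EE_def using v by (simp add: power_mono)
next
  case False
  obtain p' where p': "p = Suc p'" using p by (cases p) auto
  obtain q' where q': "q = Suc q'" using False by (cases q) auto
  have w1: "w \<le> 1"
  proof -
    have "w * real (p + q) \<le> 1 * real (p + q)" using w by simp
    thus ?thesis using p by (simp add: mult_le_cancel_right)
  qed
  show ?thesis
  proof (rule DERIV_nonneg_imp_increasing_open[OF v(2)])
    fix x assume x: "v < x" "x < w"
    have d: "((\<lambda>t. EE p q t) has_real_derivative
       x ^ p' * (1 - x) ^ q' * (real p * (1 - x) - real q * x)) (at x)"
      unfolding EE_def p' q'
      by (rule derivative_eq_intros refl)+ (simp add: algebra_simps)
    have "real p * (1 - x) - real q * x = real p - x * real (p + q)" by (simp add: algebra_simps)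
    also have "x * real (p + q) \<le> w * real (p + q)" using x by (intro mult_right_mono) auto
    hence "real p - x * real (p + q) \<ge> 0" using w by linarith
    finally have "0 \<le> real p * (1 - x) - real q * x" by simp
    moreover have "0 \<le> x ^ p' * (1 - x) ^ q'" using x v w1 by simp
    ultimately show "\<exists>y. ((\<lambda>t. EE p q t) has_real_derivative y) (at x) \<and> 0 \<le> y"
      using d by (intro exI[of _ "x ^ p' * (1 - x) ^ q' * (real p * (1 - x) - real q * x)"]) simp
  next
    show "continuous_on {v..w} (EE p q)" unfolding EE_def by (intro continuous_intros)
  qed
qed

lemma weighted_ln_neg:
  fixes c b g :: real
  assumes c: "0 < c" "c < b" and bg: "b < g" "g \<le> 1"
  shows "g * ln (c / b) + (1 - g) * ln ((1 - c) / (1 - b)) < 0"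
proof -
  define x where "x = c / b"
  define y where "y = (1 - c) / (1 - b)"
  define s where "s = g * x + (1 - g) * y"
  have b1: "b < 1" "0 < b" using bg c by auto
  have xp: "0 < x" and yp: "0 < y" using c b1 by (auto simp: x_def y_def)
  have sp: "0 < s" unfolding s_def using xp yp bg b1 c
    by (smt (verit, best) mult_nonneg_nonneg mult_pos_pos)
  have "s * (b * (1 - b)) = g * c * (1 - b) + (1 - g) * (1 - c) * b"
    unfolding s_def x_def y_def using b1 by (simp add: field_simps)
  also have "\<dots> = b * (1 - b) + (c - b) * (g - b)" by (simp add: algebra_simps)
  also have "(c - b) * (g - b) < 0" using c bg by (simp add: mult_neg_pos)
  hence "b * (1 - b) + (c - b) * (g - b) < 1 * (b * (1 - b))" by simp
  finally have s1: "s < 1" using b1 by (simp add: mult_less_cancel_right)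
  have lx: "ln x \<le> x / s - 1 + ln s"
    using ln_le_minus_one[of "x / s"] xp sp by (simp add: ln_div)
  have ly: "ln y \<le> y / s - 1 + ln s"
    using ln_le_minus_one[of "y / s"] yp sp by (simp add: ln_div)
  have g0: "0 \<le> g" "0 \<le> 1 - g" using bg b1 by auto
  have "g * ln x + (1 - g) * ln y \<le> g * (x / s - 1 + ln s) + (1 - g) * (y / s - 1 + ln s)"
    using mult_left_mono[OF lx g0(1)] mult_left_mono[OF ly g0(2)] by linarith
  also have "\<dots> = (g * x + (1 - g) * y) / s - 1 + ln s" using sp by (simp add: field_simps)
  also have "\<dots> = ln s" using sp by (simp add: s_def)
  also have "ln s < 0" using sp s1 by simp
  finally show ?thesis by (simp add: x_def y_def)
qed



lemma EE_ratio_tendsto: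
  fixes p q :: "nat \<Rightarrow> nat" and g c b :: real
  assumes c0: "0 \<le> c" and cb: "c < b" and bg: "b < g" and g1: "g \<le> 1"
    and kap: "((\<lambda>n. real (p n) / real (p n + q n)) \<longlongrightarrow> g) sequentially"
    and mt: "filterlim (\<lambda>n. real (p n + q n)) at_top sequentially"
  shows "((\<lambda>n. EE (p n) (q n) c / EE (p n) (q n) b) \<longlongrightarrow> 0) sequentially"
proof -
  have b0: "0 < b" "b < 1" using c0 cb bg g1 by auto
  have evp: "eventually (\<lambda>n. 1 \<le> p n) sequentially"
  proof -
    have "eventually (\<lambda>n. real (p n) / real (p n + q n) > 0) sequentially"
      using order_tendstoD(1)[OF kap, of 0] b0 bg by auto
    thus ?thesis
    proof eventually_elim
      case (elim n)
      show ?case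
      proof (rule ccontr)
        assume "\<not> 1 \<le> p n" hence "p n = 0" by simp
        thus False using elim by simp
      qed
    qed
  qed
  show ?thesis
  proof (cases "c = 0")
    case True
    have "eventually (\<lambda>n. EE (p n) (q n) c / EE (p n) (q n) b = 0) sequentially"
      using evp by eventually_elim (auto simp: EE_def True)
    hence "eventually (\<lambda>n. 0 = EE (p n) (q n) c / EE (p n) (q n) b) sequentially"
      by (auto elim: eventually_mono)
    thus ?thesis by (rule Lim_transform_eventually[OF tendsto_const])
  next
    case False
    hence c0': "0 < c" using c0 by simp
    define x where "x = c / b"
    define y where "y = (1 - c) / (1 - b)"
    have xp: "0 < x" and yp: "0 < y" using c0' cb b0 by (auto simp: x_def y_def)
    define L where "L = g * ln x + (1 - g) * ln y"
    have L: "L < 0" unfolding L_def x_def y_def by (rule weighted_ln_neg[OF c0' cb bg g1])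
    define kk where "kk n = real (p n) / real (p n + q n)" for n
    have "((\<lambda>n. kk n * ln x + (1 - kk n) * ln y) \<longlongrightarrow> L) sequentially"
      unfolding L_def kk_def by (intro tendsto_intros kap)
    hence ev1: "eventually (\<lambda>n. kk n * ln x + (1 - kk n) * ln y < L / 2) sequentially"
      using L by (intro order_tendstoD(2)) auto
    have ev2: "eventually (\<lambda>n. real (p n + q n) > 0) sequentially"
      using mt by (simp add: filterlim_at_top_dense)
    have lim0: "((\<lambda>n. exp ((L / 2) * real (p n + q n))) \<longlongrightarrow> 0) sequentially"
    proof -
      have "filterlim (\<lambda>n. (L / 2) * real (p n + q n)) at_bot sequentially"
        using L by (intro filterlim_tendsto_neg_mult_at_bot[OF tendsto_const _ mt]) auto
      thus ?thesis by (rule filterlim_compose[OF exp_at_bot])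
    qed
    have ev: "eventually (\<lambda>n. 0 \<le> EE (p n) (q n) c / EE (p n) (q n) b \<and>
         EE (p n) (q n) c / EE (p n) (q n) b \<le> exp ((L / 2) * real (p n + q n))) sequentially"
      using ev1 ev2
    proof eventually_elim
      case (elim n)
      define P where "P = p n" define Q where "Q = q n"
      have "EE P Q c / EE P Q b = x ^ P * y ^ Q"
        unfolding EE_def x_def y_def by (simp add: power_divide)
      also have "\<dots> = exp (real P * ln x + real Q * ln y)"
        using xp yp by (simp add: exp_add ln_realpow[symmetric])
      also have "real P * ln x + real Q * ln y = real (P + Q) * (kk n * ln x + (1 - kk n) * ln y)"
      proof -
        have m: "real (P + Q) > 0" using elim(2) unfolding P_def Q_def by simp
        have k1: "kk n = real P / real (P + Q)" "1 - kk n = real Q / real (P + Q)"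
          unfolding kk_def P_def Q_def using m[unfolded P_def Q_def] by (auto simp: field_simps)
        have "real (P + Q) * (real P / real (P + Q) * ln x) = real P * ln x"
             "real (P + Q) * (real Q / real (P + Q) * ln y) = real Q * ln y"
          using m by simp_all
        moreover have "1 - real P / real (P + Q) = real Q / real (P + Q)" using m by (simp add: field_simps)
        ultimately show ?thesis unfolding k1(1) by (simp only: distrib_left)
      qed
      also have "exp \<dots> \<le> exp ((L / 2) * real (P + Q))"
        using elim unfolding P_def Q_def
        by (subst exp_le_cancel_iff) (simp add: mult.commute mult_left_mono)
      finally have le: "EE P Q c / EE P Q b \<le> exp ((L / 2) * real (P + Q))" .
      have "0 \<le> EE P Q c / EE P Q b" using c0 cb b0 by (simp add: EE_nonneg)
      thus ?case using le unfolding P_def Q_def by simp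
    qed
    show ?thesis
      by (rule tendsto_sandwich[OF _ _ tendsto_const lim0]) (use ev in \<open>auto elim: eventually_mono\<close>)
  qed
qed



lemma EE_cmp_low:
  fixes p q :: "nat \<Rightarrow> nat" and g c b1 b2 :: real
  assumes c0: "0 \<le> c" and cb: "c < b1" and bb: "b1 \<le> b2" and bg: "b2 < g" and g1: "g \<le> 1"
    and kap: "((\<lambda>n. real (p n) / real (p n + q n)) \<longlongrightarrow> g) sequentially"
    and mt: "filterlim (\<lambda>n. real (p n + q n)) at_top sequentially"
  shows "\<exists>r. (r \<longlongrightarrow> 0) sequentially \<and> eventually (\<lambda>n. \<forall>v\<in>{0..c}. \<forall>w\<in>{b1..b2}.
            EE (p n) (q n) v \<le> r n * EE (p n) (q n) w) sequentially"
proof (intro exI conjI)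
  show "((\<lambda>n. EE (p n) (q n) c / EE (p n) (q n) b1) \<longlongrightarrow> 0) sequentially"
    using assms by (intro EE_ratio_tendsto) auto
  have ev1: "eventually (\<lambda>n. real (p n) / real (p n + q n) > b2) sequentially"
    using order_tendstoD(1)[OF kap bg] .
  have ev2: "eventually (\<lambda>n. real (p n + q n) > 0) sequentially"
    using mt by (simp add: filterlim_at_top_dense)
  show "eventually (\<lambda>n. \<forall>v\<in>{0..c}. \<forall>w\<in>{b1..b2}.
            EE (p n) (q n) v \<le> EE (p n) (q n) c / EE (p n) (q n) b1 * EE (p n) (q n) w) sequentially"
    using ev1 ev2
  proof eventually_elim
    case (elim n)
    define P where "P = p n" define Q where "Q = q n"
    have m: "real (P + Q) > 0" using elim(2) unfolding P_def Q_def by simp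
    have kb: "b2 * real (P + Q) < real P" using elim(1) m unfolding P_def Q_def by (simp add: field_simps)
    have b0: "0 < b1" "b1 < 1" using c0 cb bb bg g1 by auto
    have P1: "1 \<le> P"
    proof (rule ccontr)
      assume "\<not> 1 \<le> P" hence "P = 0" by simp
      moreover have "0 \<le> b2 * real (P + Q)" using b0 bb by simp
      ultimately show False using kb by simp
    qed
    have le_b2: "z * real (P + Q) \<le> real P" if "z \<le> b2" for z
      using mult_right_mono[OF that, of "real (P + Q)"] kb m by linarith
    have Eb1: "EE P Q b1 > 0" using b0 by (simp add: EE_pos)
    show ?case unfolding P_def[symmetric] Q_def[symmetric]
    proof (intro ballI)
      fix v w assume v: "v \<in> {0..c}" and w: "w \<in> {b1..b2}"
      have "EE P Q v \<le> EE P Q c"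
        using v cb bb by (intro EE_mono[OF P1] le_b2) auto
      also have "\<dots> = EE P Q c / EE P Q b1 * EE P Q b1" using Eb1 by simp
      also have "\<dots> \<le> EE P Q c / EE P Q b1 * EE P Q w"
        using w b0 Eb1 c0 cb
        by (intro mult_left_mono EE_mono[OF P1] le_b2) (auto intro!: divide_nonneg_pos EE_nonneg)
      finally show "EE P Q v \<le> EE P Q c / EE P Q b1 * EE P Q w" .
    qed
  qed
qed

lemma EE_cmp_high:
  fixes p q :: "nat \<Rightarrow> nat" and g d b1 b2 :: real
  assumes g0: "0 \<le> g" and gb: "g < b1" and bb: "b1 \<le> b2" and bd: "b2 < d" and d1: "d \<le> 1"
    and kap: "((\<lambda>n. real (p n) / real (p n + q n)) \<longlongrightarrow> g) sequentially"
    and mt: "filterlim (\<lambda>n. real (p n + q n)) at_top sequentially"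
  shows "\<exists>r. (r \<longlongrightarrow> 0) sequentially \<and> eventually (\<lambda>n. \<forall>v\<in>{d..1}. \<forall>w\<in>{b1..b2}.
            EE (p n) (q n) v \<le> r n * EE (p n) (q n) w) sequentially"
proof -
  have ev2: "eventually (\<lambda>n. real (p n + q n) > 0) sequentially"
    using mt by (simp add: filterlim_at_top_dense)
  have "((\<lambda>n. 1 - real (p n) / real (p n + q n)) \<longlongrightarrow> 1 - g) sequentially"
    by (intro tendsto_intros kap)
  moreover have "eventually (\<lambda>n. 1 - real (p n) / real (p n + q n) = real (q n) / real (q n + p n)) sequentially"
    using ev2 by eventually_elim (simp add: field_simps)
  ultimately have kap': "((\<lambda>n. real (q n) / real (q n + p n)) \<longlongrightarrow> 1 - g) sequentially"
    by (rule Lim_transform_eventually[OF _ ])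
  have mt': "filterlim (\<lambda>n. real (q n + p n)) at_top sequentially"
    using mt by (simp add: add.commute)
  obtain r where r: "(r \<longlongrightarrow> 0) sequentially" and ev: "eventually (\<lambda>n. \<forall>v\<in>{0..1 - d}. \<forall>w\<in>{1 - b2..1 - b1}.
            EE (q n) (p n) v \<le> r n * EE (q n) (p n) w) sequentially"
    using EE_cmp_low[of "1 - d" "1 - b2" "1 - b1" "1 - g" q p, OF _ _ _ _ _ kap' mt'] assms by auto
  show ?thesis
  proof (intro exI conjI, rule r)
    show "eventually (\<lambda>n. \<forall>v\<in>{d..1}. \<forall>w\<in>{b1..b2}. EE (p n) (q n) v \<le> r n * EE (p n) (q n) w) sequentially"
      using ev
    proof eventually_elim
      case (elim n)
      show ?case
      proof (intro ballI)
        fix v w assume v: "v \<in> {d..1}" and w: "w \<in> {b1..b2}"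
        have "EE (q n) (p n) (1 - v) \<le> r n * EE (q n) (p n) (1 - w)"
          using elim v w by auto
        thus "EE (p n) (q n) v \<le> r n * EE (p n) (q n) w"
          using EE_refl[of "q n" "p n" v] EE_refl[of "q n" "p n" w] by simp
      qed
    qed
  qed
qed



definition kk :: "nat \<Rightarrow> real \<Rightarrow> nat" where
  "kk n a = 1 + nat \<lfloor>real (n - 1) * a\<rfloor>"

definition dphi :: "nat \<Rightarrow> real \<Rightarrow> real \<Rightarrow> real" where
  "dphi n a t = real n * real ((n - 1) choose (kk n a - 1)) * EE (kk n a - 1) (n - kk n a) t"

lemma kk_bounds:
  assumes "0 \<le> a" "a \<le> 1" "1 \<le> n"
  shows "1 \<le> kk n a" "kk n a \<le> n"
proof -
  show "1 \<le> kk n a" by (simp add: kk_def)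
  have "real (n - 1) * a \<le> real (n - 1)" using assms by (simp add: mult_left_le)
  hence "\<lfloor>real (n - 1) * a\<rfloor> \<le> int (n - 1)" by linarith
  hence "nat \<lfloor>real (n - 1) * a\<rfloor> \<le> n - 1" by linarith
  thus "kk n a \<le> n" using assms(3) by (simp add: kk_def)
qed

lemma phi_kk: "phi n a t = (\<Sum>j=kk n a..n. real (n choose j) * t ^ j * (1 - t) ^ (n - j))"
  by (simp add: phi_def kk_def)

lemma phi_deriv:
  assumes "0 \<le> a" "a \<le> 1" "1 \<le> n"
  shows "(phi n a has_real_derivative dphi n a t) (at t)"
proof -
  have "(phi n a has_real_derivative (real n * real ((n - 1) choose (kk n a - 1)) * t ^ (kk n a - 1) * (1 - t) ^ (n - kk n a))) (at t)"
    unfolding phi_kk[abs_def] using kk_bounds[OF assms] by (intro tail_deriv) auto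
  thus ?thesis by (simp add: dphi_def EE_def mult.assoc)
qed

lemma phi_0:
  assumes "0 \<le> a" "a \<le> 1" "1 \<le> n"
  shows "phi n a 0 = 0"
  unfolding phi_kk using kk_bounds[OF assms] by (intro sum.neutral) auto

lemma phi_1:
  assumes "0 \<le> a" "a \<le> 1" "1 \<le> n"
  shows "phi n a 1 = 1"
proof -
  have "phi n a 1 = (\<Sum>j=kk n a..n. if j = n then 1 else 0)"
    unfolding phi_kk by (intro sum.cong) auto
  also have "\<dots> = 1" using kk_bounds[OF assms] by simp
  finally show ?thesis .
qed

lemma dphi_pos:
  assumes "0 \<le> a" "a \<le> 1" "1 \<le> n" "0 < t" "t < 1"
  shows "0 < dphi n a t"
proof -
  have "kk n a - 1 \<le> n - 1" using kk_bounds[OF assms(1-3)] by simp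
  hence "0 < (n - 1) choose (kk n a - 1)" by simp
  thus ?thesis unfolding dphi_def using assms EE_pos[of t] by simp
qed

lemma dphi_cont: "continuous_on UNIV (dphi n a)"
  unfolding dphi_def EE_def by (intro continuous_intros)

lemma psi_strict:
  fixes psi psi' :: "real \<Rightarrow> real"
  assumes d: "\<And>t. (psi has_real_derivative psi' t) (at t)"
    and pos: "\<And>t. 0 < t \<Longrightarrow> t < 1 \<Longrightarrow> 0 < psi' t"
    and xy: "0 \<le> x" "x < y" "y \<le> 1"
  shows "psi x < psi y"
proof (rule DERIV_pos_imp_increasing_open[OF xy(2)])
  fix z assume "x < z" "z < y"
  thus "\<exists>w. (psi has_real_derivative w) (at z) \<and> 0 < w" using d pos xy by force
next
  show "continuous_on {x..y} psi"
    using d by (meson DERIV_continuous continuous_at_imp_continuous_on)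
qed

lemma psi_nice:
  fixes psi psi' :: "real \<Rightarrow> real"
  assumes d: "\<And>t. (psi has_real_derivative psi' t) (at t)"
    and pos: "\<And>t. 0 < t \<Longrightarrow> t < 1 \<Longrightarrow> 0 < psi' t"
    and p0: "psi 0 = 0" and p1: "psi 1 = 1"
    and n: "nice F"
  shows "nice (psi \<circ> F)"
proof -
  have c: "continuous_on UNIV psi"
    using d by (meson DERIV_continuous continuous_at_imp_continuous_on)
  have F: "continuous_on UNIV F" "strict_mono F" "(F \<longlongrightarrow> 0) at_bot" "(F \<longlongrightarrow> 1) at_top"
    using n unfolding nice_def by auto
  have c1: "continuous_on UNIV (psi \<circ> F)"
    using continuous_on_compose[OF F(1), of psi] c by (simp add: continuous_on_subset)
  have s1: "strict_mono (psi \<circ> F)"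
  proof (rule strict_monoI)
    fix x y :: real assume "x < y"
    hence "F x < F y" by (rule nice_less[OF n])
    thus "(psi \<circ> F) x < (psi \<circ> F) y"
      using psi_strict[OF d pos] nice_pos[OF n] nice_lt1[OF n] by (simp add: less_imp_le)
  qed
  have ic: "isCont psi z" for z using c by (simp add: continuous_on_eq_continuous_at)
  have "((\<lambda>x. psi (F x)) \<longlongrightarrow> psi 0) at_bot"
    by (rule isCont_tendsto_compose[OF ic F(3)])
  moreover have "((\<lambda>x. psi (F x)) \<longlongrightarrow> psi 1) at_top"
    by (rule isCont_tendsto_compose[OF ic F(4)])
  ultimately have "((psi \<circ> F) \<longlongrightarrow> 0) at_bot \<and> ((psi \<circ> F) \<longlongrightarrow> 1) at_top"
    using p0 p1 by (simp add: comp_def)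
  thus ?thesis unfolding nice_def using c1 s1 by blast
qed

lemma qinv_comp_psi:
  fixes psi psi' :: "real \<Rightarrow> real"
  assumes d: "\<And>t. (psi has_real_derivative psi' t) (at t)"
    and pos: "\<And>t. 0 < t \<Longrightarrow> t < 1 \<Longrightarrow> 0 < psi' t"
    and p0: "psi 0 = 0" and p1: "psi 1 = 1"
    and n: "nice F" and v: "0 < v" "v < 1"
  shows "qinv (psi \<circ> F) (psi v) = qinv F v"
proof (rule nice_qinv_eq[OF psi_nice[OF d pos p0 p1 n]])
  show "(psi \<circ> F) (qinv F v) = psi v" using nice_F_qinv[OF n v] by simp
qed

lemma subst_main:
  fixes psi psi' h :: "real \<Rightarrow> real"
  assumes d: "\<And>t. (psi has_real_derivative psi' t) (at t)"
    and c': "continuous_on UNIV psi'"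
    and pos: "\<And>t. 0 < t \<Longrightarrow> t < 1 \<Longrightarrow> 0 < psi' t"
    and p0: "psi 0 = 0" and p1: "psi 1 = 1"
    and n1: "nice F1" and n2: "nice F2"
    and hc: "continuous_on UNIV h"
  shows "(\<integral>\<^sup>+u. ennreal (indicator {0<..<1} u * h (qinv (psi \<circ> F1) u - qinv (psi \<circ> F2) u)) \<partial>lborel)
       = (\<integral>\<^sup>+v. ennreal (indicator {0<..<1} v * h (qinv F1 v - qinv F2 v) * psi' v) \<partial>lborel)"
proof -
  have ng1: "nice (psi \<circ> F1)" and ng2: "nice (psi \<circ> F2)"
    using psi_nice[OF d pos p0 p1] n1 n2 by auto
  define Q1 where "Q1 u = (if u \<in> {0<..<1} then qinv (psi \<circ> F1) u else 0)" for u
  define Q2 where "Q2 u = (if u \<in> {0<..<1} then qinv (psi \<circ> F2) u else 0)" for u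
  have [measurable]: "Q1 \<in> borel_measurable borel" "Q2 \<in> borel_measurable borel"
    unfolding Q1_def Q2_def using nice_qinv_measurable ng1 ng2 by auto
  have [measurable]: "h \<in> borel_measurable borel" by (rule borel_measurable_continuous_onI[OF hc])
  define f where "f u = indicator {0<..<1} u * h (Q1 u - Q2 u)" for u
  have fm: "f \<in> borel_measurable borel" unfolding f_def by measurable
  have sm: "set_borel_measurable borel {psi 0..psi 1} f"
    unfolding set_borel_measurable_def using fm by measurable
  have dd: "\<And>x. x \<in> {0..1} \<Longrightarrow> (psi has_real_derivative psi' x) (at x)" using d by auto
  have nn: "\<And>x. x \<in> {0..1} \<Longrightarrow> 0 \<le> psi' x"
  proof -
    fix x :: real assume x: "x \<in> {0..1}"
    have "psi' x \<ge> 0" if "x = 0 \<or> x = 1"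
    proof -
      have "continuous (at x) psi'" using c' by (simp add: continuous_on_eq_continuous_at)
      hence "(psi' \<longlongrightarrow> psi' x) (at x)" by (simp add: isCont_def)
      hence "(psi' \<longlongrightarrow> psi' x) (at x within {0<..<1})"
        by (rule tendsto_mono[OF at_within_le_at])
      moreover have "eventually (\<lambda>t. psi' t \<ge> 0) (at x within {0<..<1})"
        using pos by (auto simp: eventually_at_filter less_imp_le)
      moreover have "at x within {0<..<1} \<noteq> bot"
        using that islimpt_greaterThanLessThan1[of "0::real" 1] islimpt_greaterThanLessThan2[of "0::real" 1]
        by (auto simp: trivial_limit_within)
      ultimately show ?thesis by (rule tendsto_lowerbound)
    qed
    thus "0 \<le> psi' x" using pos[of x] x by force
  qed
  have cc: "continuous_on {0..1} psi'" using c' by (rule continuous_on_subset) auto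
  have S: "(\<integral>\<^sup>+x. f x * indicator {psi 0..psi 1} x \<partial>lborel) =
           (\<integral>\<^sup>+x. f (psi x) * psi' x * indicator {0..1} x \<partial>lborel)"
    by (rule nn_integral_substitution[OF sm dd cc nn]) auto
  have L: "(\<integral>\<^sup>+x. f x * indicator {psi 0..psi 1} x \<partial>lborel) =
     (\<integral>\<^sup>+u. ennreal (indicator {0<..<1} u * h (qinv (psi \<circ> F1) u - qinv (psi \<circ> F2) u)) \<partial>lborel)"
    unfolding p0 p1 by (intro nn_integral_cong) (auto simp: f_def Q1_def Q2_def indicator_def)
  have R: "(\<integral>\<^sup>+x. f (psi x) * psi' x * indicator {0..1} x \<partial>lborel) =
     (\<integral>\<^sup>+v. ennreal (indicator {0<..<1} v * h (qinv F1 v - qinv F2 v) * psi' v) \<partial>lborel)"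
  proof (intro nn_integral_cong)
    fix x :: real
    show "ennreal (f (psi x) * psi' x * indicator {0..1} x) =
          ennreal (indicator {0<..<1} x * h (qinv F1 x - qinv F2 x) * psi' x)"
    proof (cases "x \<in> {0<..<1}")
      case True
      have px: "0 < psi x" "psi x < 1"
        using psi_strict[OF d pos, of 0 x] psi_strict[OF d pos, of x 1] True p0 p1 by auto
      show ?thesis using True px
        qinv_comp_psi[OF d pos p0 p1 n1, of x] qinv_comp_psi[OF d pos p0 p1 n2, of x]
        by (simp add: f_def Q1_def Q2_def)
    next
      case False
      hence "x \<notin> {0..1} \<or> x = 0 \<or> x = 1" by auto
      thus ?thesis using False p0 p1 by (auto simp: f_def indicator_def)
    qed
  qed
  show ?thesis using S L R by simp
qed



lemma Fext_ereal[simp]: "Fext F (ereal x) = F x" by (simp add: Fext_def)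
lemma Fext_minf[simp]: "Fext F (-\<infinity>) = 0" by (simp add: Fext_def)
lemma Fext_pinf[simp]: "Fext F \<infinity> = 1" by (simp add: Fext_def)

lemma Fext_strict: assumes n: "nice F" and "e < e'" shows "Fext F e < Fext F e'"
  using assms(2) nice_pos[OF n] nice_lt1[OF n] nice_less[OF n]
  by (cases e; cases e') auto

lemma Fext_mono: assumes n: "nice F" and "e \<le> e'" shows "Fext F e \<le> Fext F e'"
  using Fext_strict[OF n] assms(2) by (cases "e = e'") (auto simp: order_le_less)

lemma Fext_nonneg: "nice F \<Longrightarrow> 0 \<le> Fext F e"
  using nice_pos by (cases e) (auto simp: less_imp_le)

lemma Fext_le1: "nice F \<Longrightarrow> Fext F e \<le> 1"
  using nice_lt1 by (cases e) (auto simp: less_imp_le)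

lemma qinv_e_mid: assumes n: "nice F" and u: "0 < u" "u < 1"
  shows "qinv_e F u = ereal (qinv F u)"
proof -
  have "{x. u \<le> F x} = {qinv F u..}" using nice_qinv_le_iff[OF n u] by auto
  hence e: "qinv_e F u = Inf (ereal ` {qinv F u..})" by (simp add: qinv_e_def)
  show ?thesis unfolding e
    by (rule antisym) (auto intro: Inf_lower le_Inf_iff[THEN iffD2])
qed

lemma qinv_e_one: assumes n: "nice F" shows "qinv_e F 1 = \<infinity>"
proof -
  have "{x. 1 \<le> F x} = {}" using nice_lt1[OF n] by (auto simp: not_le)
  thus ?thesis by (simp add: qinv_e_def top_ereal_def)
qed

lemma qinv_e_zero: assumes n: "nice F" shows "qinv_e F 0 = -\<infinity>"
proof -
  have "{x. 0 \<le> F x} = UNIV" using nice_ge0[OF n] by auto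
  hence e: "qinv_e F 0 = Inf (range ereal)" by (simp add: qinv_e_def)
  have I: "Inf (range ereal) \<le> ereal y" for y by (rule Inf_lower) auto
  have "Inf (range ereal) = -\<infinity>"
  proof (cases "Inf (range ereal)")
    case (real r)
    from I[of "r - 1"] real show ?thesis by simp
  next
    case PInf
    from I[of 0] PInf show ?thesis by simp
  qed simp
  thus ?thesis using e by simp
qed

lemma x0_lt: assumes n: "nice F" and g: "0 < g" "g \<le> 1"
  shows "ereal x < qinv_e F g \<longleftrightarrow> F x < g"
proof (cases "g = 1")
  case True thus ?thesis using qinv_e_one[OF n] nice_lt1[OF n] by simp
next
  case False
  hence g1: "g < 1" using g by simp
  show ?thesis using qinv_e_mid[OF n g(1) g1] nice_qinv_le_iff[OF n g(1) g1, of x]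
    by (auto simp: not_le[symmetric])
qed

lemma x0_gt: assumes n: "nice F" and g: "0 \<le> g" "g < 1"
  shows "qinv_e F g < ereal x \<longleftrightarrow> g < F x"
proof (cases "g = 0")
  case True thus ?thesis using qinv_e_zero[OF n] nice_pos[OF n] by simp
next
  case False
  hence g0: "0 < g" using g by simp
  show ?thesis using qinv_e_mid[OF n g0 g(2)] nice_qinv_less_iff[OF n g0 g(2), of x]
    by auto
qed

lemma Delta_pos_iff: assumes nx: "nice FX" and ny: "nice FY" and v: "0 < v" "v < 1"
  shows "qinv FX v > qinv FY v \<longleftrightarrow> qinv FX v \<in> B0set FX FY"
  using nice_qinv_less_iff[OF ny v, of "qinv FX v"] nice_F_qinv[OF nx v]
  by (simp add: B0set_def)

lemma Delta_neg_iff: assumes nx: "nice FX" and ny: "nice FY" and v: "0 < v" "v < 1"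
  shows "qinv FX v < qinv FY v \<longleftrightarrow> FY (qinv FX v) < FX (qinv FX v)"
  using nice_qinv_le_iff[OF ny v, of "qinv FX v"] nice_F_qinv[OF nx v]
  by (auto simp: not_le[symmetric])

lemma good_nbhd:
  assumes nx: "nice FX" and ny: "nice FY" and lt: "FY x < FX x"
  shows "\<exists>e>0. \<forall>y. \<bar>y - x\<bar> < e \<longrightarrow> FY y < FX y"
proof -
  have "continuous_on UNIV FX" "continuous_on UNIV FY" using nx ny unfolding nice_def by auto
  hence "isCont (\<lambda>y. FX y - FY y) x" by (auto simp: continuous_on_eq_continuous_at intro!: continuous_intros)
  hence "((\<lambda>y. FX y - FY y) \<longlongrightarrow> FX x - FY x) (at x)" by (simp add: isCont_def)
  hence "eventually (\<lambda>y. FX y - FY y > 0) (at x)" using lt by (intro order_tendstoD(1)) auto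
  then obtain e where e: "e > 0" "\<And>y. y \<noteq> x \<Longrightarrow> dist y x < e \<Longrightarrow> FX y - FY y > 0"
    by (auto simp: eventually_at)
  show ?thesis
  proof (intro exI[of _ e] conjI allI impI)
    fix y assume "\<bar>y - x\<bar> < e"
    thus "FY y < FX y" using e lt by (cases "y = x") (auto simp: dist_real_def)
  qed (rule e)
qed



lemma low_side:
  assumes nx: "nice FX" and ny: "nice FY" and g: "0 < g" "g \<le> 1"
    and A1g: "A2set FX FY \<inter> {0<..<g} \<noteq> {} \<longrightarrow>
        max (Fext FX (c_pt FX FY g)) (g - d) < Fext FX (a_pt FX FY g)"
    and bad: "\<exists>v\<in>{0<..<1}. v < g \<and> qinv FX v > qinv FY v"
  shows "\<exists>c b1 b2. 0 \<le> c \<and> c < b1 \<and> b1 < b2 \<and> b2 < g \<and>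
     (\<forall>v\<in>{0<..<1}. v < g \<and> qinv FX v > qinv FY v \<longrightarrow> v \<le> c) \<and>
     (\<forall>v\<in>{b1..b2}. qinv FX v < qinv FY v)"
proof -
  define x0 where "x0 = qinv_e FX g"
  define c where "c = c_pt FX FY g"
  define a where "a = a_pt FX FY g"
  have K1: "ereal x < x0 \<longleftrightarrow> FX x < g" for x unfolding x0_def by (rule x0_lt[OF nx g])
  have cS: "c = Sup (ereal ` B0set FX FY \<inter> {..< x0})" by (simp add: c_def c_pt_def x0_def)
  have aS: "a = Sup (ereal ` B2set FX FY \<inter> {..< x0})" by (simp add: a_def a_pt_def x0_def)
  have badc: "v \<le> Fext FX c" if v: "v \<in> {0<..<1}" "v < g" "qinv FX v > qinv FY v" for v
  proof -
    define x where "x = qinv FX v"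
    have vv: "0 < v" "v < 1" using v by auto
    have xB: "x \<in> B0set FX FY" using Delta_pos_iff[OF nx ny vv] v unfolding x_def by simp
    have fx: "FX x = v" unfolding x_def by (rule nice_F_qinv[OF nx vv])
    have "ereal x < x0" using K1 fx v by simp
    hence "ereal x \<le> c" unfolding cS using xB by (intro Sup_upper) auto
    hence "Fext FX (ereal x) \<le> Fext FX c" by (rule Fext_mono[OF nx])
    thus ?thesis using fx by simp
  qed
  obtain v0 where v0: "v0 \<in> {0<..<1}" "v0 < g" "qinv FX v0 > qinv FY v0" using bad by auto
  have "A2set FX FY \<inter> {0<..<g} \<noteq> {}" using v0 unfolding A2set_def by auto
  hence "Fext FX c < Fext FX a" using A1g unfolding c_def a_def by simp
  hence ca: "c < a" using Fext_mono[OF nx, of a c] by (auto simp: not_le[symmetric])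
  then obtain s where s: "s \<in> ereal ` B2set FX FY \<inter> {..< x0}" "c < s" unfolding aS by (auto simp: less_Sup_iff)
  then obtain xg where xg: "s = ereal xg" "xg \<in> B2set FX FY" "ereal xg < x0" by auto
  have xgB0: "xg \<notin> B0set FX FY"
  proof
    assume "xg \<in> B0set FX FY"
    hence "ereal xg \<le> c" unfolding cS using xg by (intro Sup_upper) auto
    thus False using s xg by simp
  qed
  hence good: "FY xg < FX xg" using xg unfolding B0set_def B2set_def by auto
  obtain e where e: "e > 0" "\<And>y. \<bar>y - xg\<bar> < e \<Longrightarrow> FY y < FX y" using good_nbhd[OF nx ny good] by auto
  obtain z where z: "c < ereal z" "ereal z < ereal xg" using ereal_dense2[of c "ereal xg"] s xg by auto
  define x1 where "x1 = max z (xg - e / 2)"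
  have "ereal z \<le> ereal x1" by (simp add: x1_def)
  hence x1: "x1 < xg" "c < ereal x1" using z e
    by (auto simp: x1_def max_def intro: less_le_trans[OF z(1)])
  define b1 where "b1 = FX x1"
  define b2 where "b2 = FX xg"
  show ?thesis
  proof (intro exI conjI)
    show "0 \<le> Fext FX c" by (rule Fext_nonneg[OF nx])
    show "Fext FX c < b1" unfolding b1_def using Fext_strict[OF nx x1(2)] by simp
    show "b1 < b2" unfolding b1_def b2_def using nice_less[OF nx x1(1)] .
    show "b2 < g" unfolding b2_def using K1 xg by simp
    show "\<forall>v\<in>{0<..<1}. v < g \<and> qinv FY v < qinv FX v \<longrightarrow> v \<le> Fext FX c" using badc by auto
    show "\<forall>v\<in>{b1..b2}. qinv FX v < qinv FY v"
    proof
      fix v assume v: "v \<in> {b1..b2}"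
      have vv: "0 < v" "v < 1" using v nice_pos[OF nx, of x1] nice_lt1[OF nx, of xg]
        unfolding b1_def b2_def by auto
      define x where "x = qinv FX v"
      have "x1 \<le> x" "x \<le> xg" using v nice_qinv_le_iff[OF nx vv] nice_le_iff[OF nx] nice_F_qinv[OF nx vv]
        unfolding x_def b1_def b2_def by (metis atLeastAtMost_iff)+
      hence "\<bar>x - xg\<bar> < e" using e unfolding x1_def by (auto simp: max_def split: if_splits)
      hence "FY x < FX x" using e by simp
      thus "qinv FX v < qinv FY v" using Delta_neg_iff[OF nx ny vv] unfolding x_def by simp
    qed
  qed
qed

lemma high_side:
  assumes nx: "nice FX" and ny: "nice FY" and g: "0 \<le> g" "g < 1"
    and A2g: "A2set FX FY \<inter> {g<..<1} \<noteq> {} \<longrightarrow>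
        Fext FX (b_pt FX FY g) < min (Fext FX (d_pt FX FY g)) (g + d)"
    and bad: "\<exists>v\<in>{0<..<1}. g < v \<and> qinv FX v > qinv FY v"
  shows "\<exists>dd b1 b2. dd \<le> 1 \<and> b2 < dd \<and> b1 < b2 \<and> g < b1 \<and>
     (\<forall>v\<in>{0<..<1}. g < v \<and> qinv FX v > qinv FY v \<longrightarrow> dd \<le> v) \<and>
     (\<forall>v\<in>{b1..b2}. qinv FX v < qinv FY v)"
proof -
  define x0 where "x0 = qinv_e FX g"
  define c where "c = d_pt FX FY g"
  define a where "a = b_pt FX FY g"
  have K1: "x0 < ereal x \<longleftrightarrow> g < FX x" for x unfolding x0_def by (rule x0_gt[OF nx g])
  have cS: "c = Inf (ereal ` B0set FX FY \<inter> {x0 <..})" by (simp add: c_def d_pt_def x0_def)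
  have aS: "a = Inf (ereal ` B2set FX FY \<inter> {x0 <..})" by (simp add: a_def b_pt_def x0_def)
  have badc: "Fext FX c \<le> v" if v: "v \<in> {0<..<1}" "g < v" "qinv FX v > qinv FY v" for v
  proof -
    define x where "x = qinv FX v"
    have vv: "0 < v" "v < 1" using v by auto
    have xB: "x \<in> B0set FX FY" using Delta_pos_iff[OF nx ny vv] v unfolding x_def by simp
    have fx: "FX x = v" unfolding x_def by (rule nice_F_qinv[OF nx vv])
    have "x0 < ereal x" using K1 fx v by simp
    hence "c \<le> ereal x" unfolding cS using xB by (intro Inf_lower) auto
    hence "Fext FX c \<le> Fext FX (ereal x)" by (rule Fext_mono[OF nx])
    thus ?thesis using fx by simp
  qed
  obtain v0 where v0: "v0 \<in> {0<..<1}" "g < v0" "qinv FX v0 > qinv FY v0" using bad by auto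
  have "A2set FX FY \<inter> {g<..<1} \<noteq> {}" using v0 unfolding A2set_def by auto
  hence "Fext FX a < Fext FX c" using A2g unfolding c_def a_def by simp
  hence ca: "a < c" using Fext_mono[OF nx, of c a] by (auto simp: not_le[symmetric])
  then obtain s where s: "s \<in> ereal ` B2set FX FY \<inter> {x0 <..}" "s < c" unfolding aS by (auto simp: Inf_less_iff)
  then obtain xg where xg: "s = ereal xg" "xg \<in> B2set FX FY" "x0 < ereal xg" by auto
  have xgB0: "xg \<notin> B0set FX FY"
  proof
    assume "xg \<in> B0set FX FY"
    hence "c \<le> ereal xg" unfolding cS using xg by (intro Inf_lower) auto
    thus False using s xg by simp
  qed
  hence good: "FY xg < FX xg" using xg unfolding B0set_def B2set_def by auto
  obtain e where e: "e > 0" "\<And>y. \<bar>y - xg\<bar> < e \<Longrightarrow> FY y < FX y" using good_nbhd[OF nx ny good] by auto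
  obtain z where z: "ereal xg < ereal z" "ereal z < c" using ereal_dense2[of "ereal xg" c] s xg by auto
  define x1 where "x1 = min z (xg + e / 2)"
  have "ereal x1 \<le> ereal z" by (simp add: x1_def)
  hence x1: "xg < x1" "ereal x1 < c" using z e
    by (auto simp: x1_def min_def intro: le_less_trans[OF _ z(2)])
  define b1 where "b1 = FX xg"
  define b2 where "b2 = FX x1"
  show ?thesis
  proof (intro exI conjI)
    show "Fext FX c \<le> 1" by (rule Fext_le1[OF nx])
    show "b2 < Fext FX c" unfolding b2_def using Fext_strict[OF nx x1(2)] by simp
    show "b1 < b2" unfolding b1_def b2_def using nice_less[OF nx x1(1)] .
    show "g < b1" unfolding b1_def using K1 xg by simp
    show "\<forall>v\<in>{0<..<1}. g < v \<and> qinv FY v < qinv FX v \<longrightarrow> Fext FX c \<le> v" using badc by auto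
    show "\<forall>v\<in>{b1..b2}. qinv FX v < qinv FY v"
    proof
      fix v assume v: "v \<in> {b1..b2}"
      have vv: "0 < v" "v < 1" using v nice_pos[OF nx, of xg] nice_lt1[OF nx, of x1]
        unfolding b1_def b2_def by auto
      define x where "x = qinv FX v"
      have "xg \<le> x" "x \<le> x1" using v nice_qinv_le_iff[OF nx vv] nice_le_iff[OF nx] nice_F_qinv[OF nx vv]
        unfolding x_def b1_def b2_def by (metis atLeastAtMost_iff)+
      hence "\<bar>x - xg\<bar> < e" using e unfolding x1_def by (auto simp: min_def split: if_splits)
      hence "FY x < FX x" using e by simp
      thus "qinv FX v < qinv FY v" using Delta_neg_iff[OF nx ny vv] unfolding x_def by simp
    qed
  qed
qed



lemma K_pos:
  fixes De :: "real \<Rightarrow> real"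
  assumes [measurable]: "De \<in> borel_measurable borel"
    and b: "b1 < b2" and neg: "\<forall>v\<in>{b1..b2}. De v < 0"
  shows "0 < (\<integral>\<^sup>+v. ennreal (indicator {b1..b2} v * (De v)\<^sup>2) \<partial>lborel)"
proof (rule ccontr)
  assume "\<not> ?thesis"
  hence "(\<integral>\<^sup>+v. ennreal (indicator {b1..b2} v * (De v)\<^sup>2) \<partial>lborel) = 0" by (simp add: not_less)
  hence "AE v in lborel. ennreal (indicator {b1..b2} v * (De v)\<^sup>2) = 0"
    by (subst (asm) nn_integral_0_iff_AE) auto
  hence "AE v in lborel. v \<notin> {b1..b2}"
  proof eventually_elim
    case (elim v)
    show ?case
    proof
      assume v: "v \<in> {b1..b2}"
      hence "De v < 0" using neg by blast
      thus False using elim v by (simp add: indicator_def)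
    qed
  qed
  hence "emeasure lborel {b1..b2} = 0"
    by (subst (asm) AE_iff_measurable[of "{b1..b2}"]) auto
  thus False using b by simp
qed

lemma gen_side:
  fixes De Ef :: "real \<Rightarrow> real" and S V :: "real set" and r b1 b2 :: real
  assumes [measurable]: "De \<in> borel_measurable borel" "Ef \<in> borel_measurable borel" "S \<in> sets borel"
    and Ef0: "\<forall>v\<in>{0<..<1}. 0 \<le> Ef v"
    and M: "(\<integral>\<^sup>+v. ennreal (indicator {0<..<1} v * (De v)\<^sup>2) \<partial>lborel) < \<infinity>"
    and b: "0 < b1" "b1 < b2" "b2 < 1" and neg: "\<forall>v\<in>{b1..b2}. De v < 0"
    and loc: "\<forall>v\<in>{0<..<1}. v \<in> S \<and> De v > 0 \<longrightarrow> v \<in> V"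
    and cmp: "\<forall>v\<in>V. \<forall>w\<in>{b1..b2}. Ef v \<le> r * Ef w"
    and r0: "0 \<le> r"
  shows "(\<integral>\<^sup>+v. ennreal (indicator {0<..<1} v * (max (De v) 0)\<^sup>2 * indicator S v * Ef v) \<partial>lborel)
     \<le> ennreal (r * (enn2real (\<integral>\<^sup>+v. ennreal (indicator {0<..<1} v * (De v)\<^sup>2) \<partial>lborel) /
                     enn2real (\<integral>\<^sup>+v. ennreal (indicator {b1..b2} v * (De v)\<^sup>2) \<partial>lborel)))
       * (\<integral>\<^sup>+v. ennreal (indicator {0<..<1} v * (De v)\<^sup>2 * Ef v) \<partial>lborel)"
proof -
  define Mi where "Mi = (\<integral>\<^sup>+v. ennreal (indicator {0<..<1} v * (De v)\<^sup>2) \<partial>lborel)"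
  define Ki where "Ki = (\<integral>\<^sup>+v. ennreal (indicator {b1..b2} v * (De v)\<^sup>2) \<partial>lborel)"
  define I where "I = (\<integral>\<^sup>+v. ennreal (indicator {0<..<1} v * (max (De v) 0)\<^sup>2 * indicator S v * Ef v) \<partial>lborel)"
  define T where "T = (\<integral>\<^sup>+v. ennreal (indicator {0<..<1} v * (De v)\<^sup>2 * Ef v) \<partial>lborel)"
  have sub: "{b1..b2} \<subseteq> {0<..<1}" using b by auto
  have Kpos: "0 < Ki" unfolding Ki_def using K_pos[of De b1 b2] b neg by auto
  have KM: "Ki \<le> Mi" unfolding Ki_def Mi_def
    using sub by (intro nn_integral_mono) (auto simp: indicator_def)
  have Mfin: "Mi < \<infinity>" using M by (simp add: Mi_def)
  have Kfin: "Ki < \<infinity>" using KM Mfin by simp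
  obtain M' where M': "Mi = ennreal M'" "0 \<le> M'" using Mfin by (cases Mi) auto
  obtain K' where K': "Ki = ennreal K'" "0 \<le> K'" using Kfin by (cases Ki) auto
  have K'pos: "0 < K'" using Kpos K' by auto
  have step1: "I \<le> ennreal (r * Ef w) * Mi" if w: "w \<in> {b1..b2}" for w
  proof -
    have "I \<le> (\<integral>\<^sup>+v. ennreal (r * Ef w) * ennreal (indicator {0<..<1} v * (De v)\<^sup>2) \<partial>lborel)"
      unfolding I_def
    proof (intro nn_integral_mono)
      fix v :: real
      show "ennreal (indicator {0<..<1} v * (max (De v) 0)\<^sup>2 * indicator S v * Ef v)
            \<le> ennreal (r * Ef w) * ennreal (indicator {0<..<1} v * (De v)\<^sup>2)"
      proof (cases "v \<in> {0<..<1} \<and> v \<in> S \<and> De v > 0")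
        case True
        have "Ef v \<le> r * Ef w" using cmp loc True w by blast
        moreover have "0 \<le> Ef v" using Ef0 True by auto
        ultimately have h: "(De v)\<^sup>2 * Ef v \<le> (r * Ef w) * (De v)\<^sup>2" "0 \<le> r * Ef w"
          by (simp_all add: mult.commute mult_right_mono)
        have "ennreal (r * Ef w) * ennreal ((De v)\<^sup>2) = ennreal ((r * Ef w) * (De v)\<^sup>2)"
          using h(2) by (simp add: ennreal_mult')
        thus ?thesis using True h(1) by (simp add: max_def ennreal_leI)
      next
        case False
        hence "indicator {0<..<1} v * (max (De v) 0)\<^sup>2 * indicator S v * Ef v = 0"
          by (auto simp: indicator_def max_def)
        thus ?thesis by (metis ennreal_0 zero_le)
      qed
    qed
    also have "\<dots> = ennreal (r * Ef w) * Mi" unfolding Mi_def by (rule nn_integral_cmult) auto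
    finally show ?thesis .
  qed
  have "I * Ki = (\<integral>\<^sup>+w. I * ennreal (indicator {b1..b2} w * (De w)\<^sup>2) \<partial>lborel)"
    unfolding Ki_def by (rule nn_integral_cmult[symmetric]) auto
  also have "\<dots> \<le> (\<integral>\<^sup>+w. (ennreal r * Mi) * ennreal (indicator {0<..<1} w * (De w)\<^sup>2 * Ef w) \<partial>lborel)"
  proof (intro nn_integral_mono)
    fix w :: real
    show "I * ennreal (indicator {b1..b2} w * (De w)\<^sup>2)
          \<le> (ennreal r * Mi) * ennreal (indicator {0<..<1} w * (De w)\<^sup>2 * Ef w)"
    proof (cases "w \<in> {b1..b2}")
      case True
      have Efw: "0 \<le> Ef w" using Ef0 sub True by auto
      have "I * ennreal ((De w)\<^sup>2) \<le> ennreal (r * Ef w) * Mi * ennreal ((De w)\<^sup>2)"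
        using step1[OF True] by (intro mult_right_mono) auto
      also have "\<dots> = (ennreal r * Mi) * ennreal ((De w)\<^sup>2 * Ef w)"
        using r0 Efw by (simp add: ennreal_mult' mult_ac)
      finally show ?thesis using True sub by (auto simp: indicator_def)
    qed simp
  qed
  also have "\<dots> = (ennreal r * Mi) * T"
    unfolding T_def by (rule nn_integral_cmult) auto
  finally have IK: "I * ennreal K' \<le> ennreal (r * M') * T" using M' K' r0 by (simp add: ennreal_mult)
  have "I = I * ennreal K' * ennreal (1 / K')"
    using K'pos by (simp add: mult.assoc ennreal_mult[symmetric])
  also have "\<dots> \<le> ennreal (r * M') * T * ennreal (1 / K')" using IK by (rule mult_right_mono) simp
  also have "\<dots> = ennreal (r * (M' / K')) * T"
    using r0 M' K'pos by (simp add: ennreal_mult'[symmetric] mult_ac divide_inverse)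
  finally show ?thesis
    using M' K' unfolding I_def T_def Mi_def Ki_def by simp
qed



lemma EE_meas[measurable]: "EE p q \<in> borel_measurable borel"
  unfolding EE_def by (intro borel_measurable_continuous_onI continuous_intros)

lemma component:
  fixes FX FY :: "real \<Rightarrow> real" and g d d' :: real and P Q :: "nat \<Rightarrow> nat"
  assumes nx: "nice FX" and ny: "nice FY" and g: "0 \<le> g" "g \<le> 1"
    and A1g: "A2set FX FY \<inter> {0<..<g} \<noteq> {} \<longrightarrow>
        max (Fext FX (c_pt FX FY g)) (g - d) < Fext FX (a_pt FX FY g)"
    and A2g: "A2set FX FY \<inter> {g<..<1} \<noteq> {} \<longrightarrow>
        Fext FX (b_pt FX FY g) < min (Fext FX (d_pt FX FY g)) (g + d')"
    and M: "(\<integral>\<^sup>+v. ennreal (indicator {0<..<1} v * (qinv FX v - qinv FY v)\<^sup>2) \<partial>lborel) < \<infinity>"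
    and kap: "((\<lambda>n. real (P n) / real (P n + Q n)) \<longlongrightarrow> g) sequentially"
    and mt: "filterlim (\<lambda>n. real (P n + Q n)) at_top sequentially"
  shows "\<exists>\<rho>. (\<rho> \<longlongrightarrow> 0) sequentially \<and> (\<forall>n. 0 \<le> \<rho> n) \<and> eventually (\<lambda>n.
     (\<integral>\<^sup>+v. ennreal (indicator {0<..<1} v * (max (qinv FX v - qinv FY v) 0)\<^sup>2 * EE (P n) (Q n) v) \<partial>lborel)
     \<le> ennreal (\<rho> n) * (\<integral>\<^sup>+v. ennreal (indicator {0<..<1} v * (qinv FX v - qinv FY v)\<^sup>2 * EE (P n) (Q n) v) \<partial>lborel))
     sequentially"
proof -
  define De where "De v = (if v \<in> {0<..<1} then qinv FX v - qinv FY v else 0)" for v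
  have De_eq: "De = (\<lambda>v. (if v \<in> {0<..<1} then qinv FX v else 0) - (if v \<in> {0<..<1} then qinv FY v else 0))"
    by (auto simp: De_def)
  have [measurable]: "De \<in> borel_measurable borel"
    unfolding De_eq using nice_qinv_measurable[OF nx] nice_qinv_measurable[OF ny] by measurable
  have cong1: "indicator {0<..<1} v * f (qinv FX v - qinv FY v) = indicator {0<..<1} v * f (De v)" for f :: "real \<Rightarrow> real" and v
    by (auto simp: De_def indicator_def)
  have MD: "(\<integral>\<^sup>+v. ennreal (indicator {0<..<1} v * (De v)\<^sup>2) \<partial>lborel) < \<infinity>"
    using M by (simp add: cong1[where f = "\<lambda>x. x\<^sup>2"])
  define T where "T n = (\<integral>\<^sup>+v. ennreal (indicator {0<..<1} v * (De v)\<^sup>2 * EE (P n) (Q n) v) \<partial>lborel)" for n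
  define Lo where "Lo n = (\<integral>\<^sup>+v. ennreal (indicator {0<..<1} v * (max (De v) 0)\<^sup>2 * indicator {..<g} v * EE (P n) (Q n) v) \<partial>lborel)" for n
  define Hi where "Hi n = (\<integral>\<^sup>+v. ennreal (indicator {0<..<1} v * (max (De v) 0)\<^sup>2 * indicator {g<..} v * EE (P n) (Q n) v) \<partial>lborel)" for n
  have Ef0: "\<forall>v\<in>{0<..<1}. 0 \<le> EE (P n) (Q n) v" for n by (auto intro: EE_nonneg)
  have low: "\<exists>\<rho>. (\<rho> \<longlongrightarrow> 0) sequentially \<and> (\<forall>n. 0 \<le> \<rho> n) \<and> eventually (\<lambda>n. Lo n \<le> ennreal (\<rho> n) * T n) sequentially"
  proof (cases "\<exists>v\<in>{0<..<1}. v < g \<and> qinv FX v > qinv FY v")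
    case False
    have z: "indicator {0<..<1} v * (max (De v) 0)\<^sup>2 * indicator {..<g} v * EE (P n) (Q n) v = 0" for v n
      using False by (auto simp: De_def indicator_def max_def)
    have "Lo n = 0" for n unfolding Lo_def z by simp
    thus ?thesis by (intro exI[of _ "\<lambda>_. 0"]) auto
  next
    case True
    have g0: "0 < g" using True by auto
    obtain c b1 b2 where cb: "0 \<le> c" "c < b1" "b1 < b2" "b2 < g"
      and loc: "\<forall>v\<in>{0<..<1}. v < g \<and> qinv FX v > qinv FY v \<longrightarrow> v \<le> c"
      and neg: "\<forall>v\<in>{b1..b2}. qinv FX v < qinv FY v"
      using low_side[OF nx ny g0 g(2) A1g True] by blast
    obtain r where r: "(r \<longlongrightarrow> 0) sequentially" and evr: "eventually (\<lambda>n. \<forall>v\<in>{0..c}. \<forall>w\<in>{b1..b2}.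
            EE (P n) (Q n) v \<le> r n * EE (P n) (Q n) w) sequentially"
      using EE_cmp_low[OF cb(1,2) _ cb(4) g(2) kap mt] cb(3) by auto
    have b01: "0 < b1" "b2 < 1" using cb g by auto
    have negD: "\<forall>v\<in>{b1..b2}. De v < 0" using neg b01 cb(3) by (auto simp: De_def)
    have locD: "\<forall>v\<in>{0<..<1}. v \<in> {..<g} \<and> De v > 0 \<longrightarrow> v \<in> {0..c}" using loc by (auto simp: De_def)
    define C where "C = enn2real (\<integral>\<^sup>+v. ennreal (indicator {0<..<1} v * (De v)\<^sup>2) \<partial>lborel) /
                     enn2real (\<integral>\<^sup>+v. ennreal (indicator {b1..b2} v * (De v)\<^sup>2) \<partial>lborel)"
    have C0: "0 \<le> C" unfolding C_def by simp
    show ?thesis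
    proof (intro exI conjI allI)
      show "((\<lambda>n. max (r n) 0 * C) \<longlongrightarrow> 0) sequentially"
        using tendsto_mult_right[OF tendsto_max[OF r tendsto_const[of 0]], of C] by simp
      show "0 \<le> max (r n) 0 * C" for n using C0 by simp
      show "eventually (\<lambda>n. Lo n \<le> ennreal (max (r n) 0 * C) * T n) sequentially"
        using evr
      proof eventually_elim
        case (elim n)
        have cmp: "\<forall>v\<in>{0..c}. \<forall>w\<in>{b1..b2}. EE (P n) (Q n) v \<le> max (r n) 0 * EE (P n) (Q n) w"
        proof (intro ballI)
          fix v w assume v: "v \<in> {0..c}" and w: "w \<in> {b1..b2}"
          have "0 \<le> EE (P n) (Q n) w" using w b01 cb by (intro EE_nonneg) auto
          hence "r n * EE (P n) (Q n) w \<le> max (r n) 0 * EE (P n) (Q n) w" by (simp add: mult_right_mono)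
          thus "EE (P n) (Q n) v \<le> max (r n) 0 * EE (P n) (Q n) w" using elim v w by force
        qed
        show ?case unfolding Lo_def T_def C_def
          by (rule gen_side[OF _ _ _ Ef0 MD b01(1) cb(3) b01(2) negD locD cmp]) auto
      qed
    qed
  qed
  have high: "\<exists>\<rho>. (\<rho> \<longlongrightarrow> 0) sequentially \<and> (\<forall>n. 0 \<le> \<rho> n) \<and> eventually (\<lambda>n. Hi n \<le> ennreal (\<rho> n) * T n) sequentially"
  proof (cases "\<exists>v\<in>{0<..<1}. g < v \<and> qinv FX v > qinv FY v")
    case False
    have z: "indicator {0<..<1} v * (max (De v) 0)\<^sup>2 * indicator {g<..} v * EE (P n) (Q n) v = 0" for v n
      using False by (auto simp: De_def indicator_def max_def)
    have "Hi n = 0" for n unfolding Hi_def z by simp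
    thus ?thesis by (intro exI[of _ "\<lambda>_. 0"]) auto
  next
    case True
    have g1: "g < 1" using True by auto
    obtain dd b1 b2 where cb: "dd \<le> 1" "b2 < dd" "b1 < b2" "g < b1"
      and loc: "\<forall>v\<in>{0<..<1}. g < v \<and> qinv FX v > qinv FY v \<longrightarrow> dd \<le> v"
      and neg: "\<forall>v\<in>{b1..b2}. qinv FX v < qinv FY v"
      using high_side[OF nx ny g(1) g1 A2g True] by blast
    obtain r where r: "(r \<longlongrightarrow> 0) sequentially" and evr: "eventually (\<lambda>n. \<forall>v\<in>{dd..1}. \<forall>w\<in>{b1..b2}.
            EE (P n) (Q n) v \<le> r n * EE (P n) (Q n) w) sequentially"
      using EE_cmp_high[OF g(1) cb(4) _ cb(2) cb(1) kap mt] cb(3) by auto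
    have b01: "0 < b1" "b2 < 1" using cb g by auto
    have negD: "\<forall>v\<in>{b1..b2}. De v < 0" using neg b01 cb(3) by (auto simp: De_def)
    have locD: "\<forall>v\<in>{0<..<1}. v \<in> {g<..} \<and> De v > 0 \<longrightarrow> v \<in> {dd..1}" using loc by (auto simp: De_def)
    define C where "C = enn2real (\<integral>\<^sup>+v. ennreal (indicator {0<..<1} v * (De v)\<^sup>2) \<partial>lborel) /
                     enn2real (\<integral>\<^sup>+v. ennreal (indicator {b1..b2} v * (De v)\<^sup>2) \<partial>lborel)"
    have C0: "0 \<le> C" unfolding C_def by simp
    show ?thesis
    proof (intro exI conjI allI)
      show "((\<lambda>n. max (r n) 0 * C) \<longlongrightarrow> 0) sequentially"
        using tendsto_mult_right[OF tendsto_max[OF r tendsto_const[of 0]], of C] by simp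
      show "0 \<le> max (r n) 0 * C" for n using C0 by simp
      show "eventually (\<lambda>n. Hi n \<le> ennreal (max (r n) 0 * C) * T n) sequentially"
        using evr
      proof eventually_elim
        case (elim n)
        have cmp: "\<forall>v\<in>{dd..1}. \<forall>w\<in>{b1..b2}. EE (P n) (Q n) v \<le> max (r n) 0 * EE (P n) (Q n) w"
        proof (intro ballI)
          fix v w assume v: "v \<in> {dd..1}" and w: "w \<in> {b1..b2}"
          have "0 \<le> EE (P n) (Q n) w" using w b01 cb by (intro EE_nonneg) auto
          hence "r n * EE (P n) (Q n) w \<le> max (r n) 0 * EE (P n) (Q n) w" by (simp add: mult_right_mono)
          thus "EE (P n) (Q n) v \<le> max (r n) 0 * EE (P n) (Q n) w" using elim v w by force
        qed
        show ?case unfolding Hi_def T_def C_def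
          by (rule gen_side[OF _ _ _ Ef0 MD b01(1) cb(3) b01(2) negD locD cmp]) auto
      qed
    qed
  qed
  obtain r1 where r1: "(r1 \<longlongrightarrow> 0) sequentially" "\<forall>n. 0 \<le> r1 n"
    "eventually (\<lambda>n. Lo n \<le> ennreal (r1 n) * T n) sequentially" using low by blast
  obtain r2 where r2: "(r2 \<longlongrightarrow> 0) sequentially" "\<forall>n. 0 \<le> r2 n"
    "eventually (\<lambda>n. Hi n \<le> ennreal (r2 n) * T n) sequentially" using high by blast
  show ?thesis
  proof (intro exI conjI allI)
    show "((\<lambda>n. r1 n + r2 n) \<longlongrightarrow> 0) sequentially" using tendsto_add[OF r1(1) r2(1)] by simp
    show "0 \<le> r1 n + r2 n" for n using r1(2) r2(2) by (simp add: add_nonneg_nonneg)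
    show "eventually (\<lambda>n.
     (\<integral>\<^sup>+v. ennreal (indicator {0<..<1} v * (max (qinv FX v - qinv FY v) 0)\<^sup>2 * EE (P n) (Q n) v) \<partial>lborel)
     \<le> ennreal (r1 n + r2 n) * (\<integral>\<^sup>+v. ennreal (indicator {0<..<1} v * (qinv FX v - qinv FY v)\<^sup>2 * EE (P n) (Q n) v) \<partial>lborel))
     sequentially"
      using r1(3) r2(3)
    proof eventually_elim
      case (elim n)
      have "(\<integral>\<^sup>+v. ennreal (indicator {0<..<1} v * (max (qinv FX v - qinv FY v) 0)\<^sup>2 * EE (P n) (Q n) v) \<partial>lborel)
          = (\<integral>\<^sup>+v. ennreal (indicator {0<..<1} v * (max (De v) 0)\<^sup>2 * indicator {..<g} v * EE (P n) (Q n) v)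
                 + ennreal (indicator {0<..<1} v * (max (De v) 0)\<^sup>2 * indicator {g<..} v * EE (P n) (Q n) v) \<partial>lborel)"
      proof (intro nn_integral_cong_AE)
        show "AE v in lborel. ennreal (indicator {0<..<1} v * (max (qinv FX v - qinv FY v) 0)\<^sup>2 * EE (P n) (Q n) v) =
          ennreal (indicator {0<..<1} v * (max (De v) 0)\<^sup>2 * indicator {..<g} v * EE (P n) (Q n) v)
                 + ennreal (indicator {0<..<1} v * (max (De v) 0)\<^sup>2 * indicator {g<..} v * EE (P n) (Q n) v)"
          using AE_lborel_singleton[of g]
        proof eventually_elim
          case (elim v)
          show ?case
          proof (cases "v \<in> {0<..<1}")
            case True
            have e0: "0 \<le> EE (P n) (Q n) v" using True by (intro EE_nonneg) auto
            show ?thesis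
            proof (cases "v < g")
              case True
              thus ?thesis using \<open>v \<in> {0<..<1}\<close> by (simp add: De_def indicator_def)
            next
              case False
              hence "g < v" using elim by simp
              thus ?thesis using \<open>v \<in> {0<..<1}\<close> by (simp add: De_def indicator_def)
            qed
          qed (auto simp: indicator_def)
        qed
      qed
      also have "\<dots> = Lo n + Hi n" unfolding Lo_def Hi_def by (rule nn_integral_add) auto
      also have "\<dots> \<le> ennreal (r1 n) * T n + ennreal (r2 n) * T n" using elim by (rule add_mono)
      also have "\<dots> = ennreal (r1 n + r2 n) * T n"
        using r1(2) r2(2) by (simp add: distrib_right ennreal_plus)
      also have "T n = (\<integral>\<^sup>+v. ennreal (indicator {0<..<1} v * (qinv FX v - qinv FY v)\<^sup>2 * EE (P n) (Q n) v) \<partial>lborel)"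
        unfolding T_def by (intro nn_integral_cong) (auto simp: De_def indicator_def)
      finally show ?case .
    qed
  qed
qed



lemma eps_bound:
  fixes G1 G2 :: "real \<Rightarrow> real" and \<rho> :: real
  assumes n1: "nice G1" and n2: "nice G2" and r0: "0 \<le> \<rho>"
    and bound: "(\<integral>\<^sup>+u. ennreal (indicator {0<..<1} u * (max (qinv G1 u - qinv G2 u) 0)\<^sup>2) \<partial>lborel)
       \<le> ennreal \<rho> * (\<integral>\<^sup>+u. ennreal (indicator {0<..<1} u * (qinv G1 u - qinv G2 u)\<^sup>2) \<partial>lborel)"
  shows "0 \<le> epsW2 G1 G2 \<and> epsW2 G1 G2 \<le> \<rho>"
proof -
  define Q1 where "Q1 u = (if u \<in> {0<..<1} then qinv G1 u else 0)" for u
  define Q2 where "Q2 u = (if u \<in> {0<..<1} then qinv G2 u else 0)" for u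
  have [measurable]: "Q1 \<in> borel_measurable borel" "Q2 \<in> borel_measurable borel"
    unfolding Q1_def Q2_def using nice_qinv_measurable n1 n2 by auto
  define f where "f u = indicator {0<..<1} u * (Q1 u - Q2 u)\<^sup>2" for u
  define fp where "fp u = indicator {0<..<1} u * (max (Q1 u - Q2 u) 0)\<^sup>2" for u
  have fm[measurable]: "f \<in> borel_measurable borel" unfolding f_def by measurable
  have fpm[measurable]: "fp \<in> borel_measurable borel" unfolding fp_def by measurable
  have f_eq: "indicator {0<..<1} u * (qinv G1 u - qinv G2 u)\<^sup>2 = f u" for u
    by (auto simp: f_def Q1_def Q2_def indicator_def)
  have fp_eq: "indicator {0<..<1} u * (max (qinv G1 u - qinv G2 u) 0)\<^sup>2 = fp u" for u
    by (auto simp: fp_def Q1_def Q2_def indicator_def)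
  have I1: "(LINT u:{0<..<1::real}|lborel. (qinv G1 u - qinv G2 u)\<^sup>2) = integral\<^sup>L lborel f"
    unfolding set_lebesgue_integral_def by (intro Bochner_Integration.integral_cong) (auto simp: f_eq[symmetric])
  have I2: "(LINT u:{u\<in>{0<..<1::real}. qinv G1 u > qinv G2 u}|lborel. (qinv G1 u - qinv G2 u)\<^sup>2) = integral\<^sup>L lborel fp"
    unfolding set_lebesgue_integral_def
    by (intro Bochner_Integration.integral_cong) (auto simp: fp_def Q1_def Q2_def indicator_def max_def)
  have W: "W2 G1 G2 = sqrt (integral\<^sup>L lborel f)" unfolding W2_def I1 ..
  have E: "epsW2 G1 G2 = (if W2 G1 G2 = 0 then 0 else integral\<^sup>L lborel fp / (W2 G1 G2)\<^sup>2)"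
    unfolding epsW2_def I2 ..
  have f0: "0 \<le> f u" "0 \<le> fp u" for u by (auto simp: f_def fp_def)
  show ?thesis
  proof (cases "integrable lborel f")
    case False
    hence "W2 G1 G2 = 0" unfolding W by (simp add: not_integrable_integral_eq)
    thus ?thesis using E r0 by simp
  next
    case True
    have ip: "integrable lborel fp"
      by (rule Bochner_Integration.integrable_bound[OF True]) (auto simp: f_def fp_def indicator_def max_def)
    have e1: "(\<integral>\<^sup>+u. ennreal (f u) \<partial>lborel) = ennreal (integral\<^sup>L lborel f)"
      by (rule nn_integral_eq_integral[OF True]) (simp add: f0)
    have e2: "(\<integral>\<^sup>+u. ennreal (fp u) \<partial>lborel) = ennreal (integral\<^sup>L lborel fp)"
      by (rule nn_integral_eq_integral[OF ip]) (simp add: f0)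
    have If0: "0 \<le> integral\<^sup>L lborel f" by (simp add: f0)
    have Ip0: "0 \<le> integral\<^sup>L lborel fp" by (simp add: f0)
    have "ennreal (integral\<^sup>L lborel fp) \<le> ennreal (\<rho> * integral\<^sup>L lborel f)"
      using bound unfolding f_eq fp_eq e1 e2 using r0 If0 by (simp add: ennreal_mult)
    hence le: "integral\<^sup>L lborel fp \<le> \<rho> * integral\<^sup>L lborel f"
      using r0 If0 by (simp add: ennreal_le_iff)
    show ?thesis
    proof (cases "W2 G1 G2 = 0")
      case True thus ?thesis using E r0 by simp
    next
      case False
      hence pos: "0 < integral\<^sup>L lborel f" using W If0 by auto
      have "(W2 G1 G2)\<^sup>2 = integral\<^sup>L lborel f" unfolding W using If0 by simp
      hence E': "epsW2 G1 G2 = integral\<^sup>L lborel fp / integral\<^sup>L lborel f" using E False by simp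
      show ?thesis unfolding E' using pos le Ip0 by (simp add: divide_le_eq)
    qed
  qed
qed



lemma kk_sum: assumes "0 \<le> a" "a \<le> 1" "1 \<le> n"
  shows "kk n a - 1 + (n - kk n a) = n - 1"
  using kk_bounds[OF assms] by simp

lemma kap_lemma:
  fixes gs :: "nat \<Rightarrow> real" and g :: real
  assumes lim: "(gs \<longlongrightarrow> g) sequentially" and rng: "\<forall>n. 0 \<le> gs n \<and> gs n \<le> 1"
  shows "((\<lambda>n. real (kk n (gs n) - 1) / real (kk n (gs n) - 1 + (n - kk n (gs n)))) \<longlongrightarrow> g) sequentially"
    and "filterlim (\<lambda>n. real (kk n (gs n) - 1 + (n - kk n (gs n)))) at_top sequentially"
proof -
  have den: "eventually (\<lambda>n. real (kk n (gs n) - 1 + (n - kk n (gs n))) = real n - 1) sequentially"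
    using eventually_ge_at_top[of "1::nat"]
    by eventually_elim (use rng kk_sum in \<open>auto simp: of_nat_diff\<close>)
  have "filterlim (\<lambda>n. (-1) + real n) at_top sequentially"
    by (rule filterlim_tendsto_add_at_top[OF tendsto_const filterlim_real_sequentially])
  thus "filterlim (\<lambda>n. real (kk n (gs n) - 1 + (n - kk n (gs n)))) at_top sequentially"
    by (rule filterlim_cong[THEN iffD1, rotated 3]) (use den in \<open>auto elim: eventually_mono\<close>)
  define kap where "kap n = real (kk n (gs n) - 1) / (real n - 1)" for n
  have bnd: "eventually (\<lambda>n. - (2 / real n) \<le> kap n - gs n \<and> kap n - gs n \<le> 0) sequentially"
    using eventually_ge_at_top[of "2::nat"]
  proof eventually_elim
    case (elim n)
    define m where "m = real n - 1"
    have m1: "1 \<le> m" using elim by (simp add: m_def)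
    have rm: "real (n - 1) = m" using elim by (simp add: m_def of_nat_diff)
    have x0: "0 \<le> m * gs n" using m1 rng by simp
    have k: "real (kk n (gs n) - 1) = of_int \<lfloor>m * gs n\<rfloor>"
      unfolding kk_def rm[symmetric] using x0 rm by simp
    have f1: "of_int \<lfloor>m * gs n\<rfloor> \<le> m * gs n" by simp
    have f2: "m * gs n - 1 < of_int \<lfloor>m * gs n\<rfloor>" by linarith
    have kap: "kap n = of_int \<lfloor>m * gs n\<rfloor> / m" unfolding kap_def k m_def ..
    have "kap n \<le> gs n" unfolding kap using f1 m1 by (simp add: divide_le_eq mult.commute)
    moreover have "gs n - 1 / m \<le> kap n"
    proof -
      have "(m * gs n - 1) / m \<le> of_int \<lfloor>m * gs n\<rfloor> / m" using f2 m1 by (intro divide_right_mono) auto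
      moreover have "(m * gs n - 1) / m = gs n - 1 / m" using m1 by (simp add: field_simps)
      ultimately show ?thesis unfolding kap by simp
    qed
    moreover have "1 / m \<le> 2 / real n" using m1 elim unfolding m_def by (simp add: field_simps)
    ultimately show ?case by linarith
  qed
  have l2: "((\<lambda>n. - (2 / real n)) \<longlongrightarrow> 0) sequentially"
    using tendsto_minus[OF tendsto_mult_right[OF lim_1_over_n, of 2]] by simp
  have "((\<lambda>n. kap n - gs n) \<longlongrightarrow> 0) sequentially"
    by (rule tendsto_sandwich[OF _ _ l2 tendsto_const]) (use bnd in \<open>auto elim: eventually_mono\<close>)
  hence "((\<lambda>n. (kap n - gs n) + gs n) \<longlongrightarrow> 0 + g) sequentially" by (intro tendsto_add lim)
  hence "(kap \<longlongrightarrow> g) sequentially" by simp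
  thus "((\<lambda>n. real (kk n (gs n) - 1) / real (kk n (gs n) - 1 + (n - kk n (gs n)))) \<longlongrightarrow> g) sequentially"
    by (rule filterlim_cong[THEN iffD1, rotated 3]) (use den in \<open>auto simp: kap_def elim: eventually_mono\<close>)
qed

lemma bigo_to_tendsto:
  fixes f :: "nat \<Rightarrow> real"
  assumes "f \<in> O(\<lambda>n. 1 / real n)"
  shows "(f \<longlongrightarrow> 0) sequentially"
proof -
  have "(\<lambda>n. 1 / real n) \<in> o(\<lambda>n. 1)"
    by (rule smalloI_tendsto) (use lim_1_over_n in auto)
  hence "f \<in> o(\<lambda>n. 1)" using assms by (rule landau_o.big_small_trans[rotated])
  thus ?thesis using smalloD_tendsto by fastforce
qed



lemma meas_h:
  fixes h :: "real \<Rightarrow> real"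
  assumes nx: "nice FX" and ny: "nice FY" and hc: "continuous_on UNIV h"
  shows "(\<lambda>v. indicator {0<..<1} v * h (qinv FX v - qinv FY v)) \<in> borel_measurable borel"
proof -
  define Q1 where "Q1 u = (if u \<in> {0<..<1} then qinv FX u else 0)" for u
  define Q2 where "Q2 u = (if u \<in> {0<..<1} then qinv FY u else 0)" for u
  have [measurable]: "Q1 \<in> borel_measurable borel" "Q2 \<in> borel_measurable borel"
    unfolding Q1_def Q2_def using nice_qinv_measurable nx ny by auto
  have [measurable]: "h \<in> borel_measurable borel" by (rule borel_measurable_continuous_onI[OF hc])
  have "(\<lambda>v. indicator {0<..<1} v * h (Q1 v - Q2 v)) \<in> borel_measurable borel" by measurable
  also have "(\<lambda>v. indicator {0<..<1} v * h (Q1 v - Q2 v)) = (\<lambda>v. indicator {0<..<1} v * h (qinv FX v - qinv FY v))"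
    by (auto simp: Q1_def Q2_def indicator_def)
  finally show ?thesis .
qed

lemma decomp:
  fixes H :: "real \<Rightarrow> real" and w :: "nat \<Rightarrow> real" and E :: "nat \<Rightarrow> real \<Rightarrow> real"
  assumes m: "(\<lambda>v. indicator {0<..<1} v * H v) \<in> borel_measurable borel"
    and Em: "\<And>i. E i \<in> borel_measurable borel"
    and H0: "\<And>v. 0 \<le> H v" and w0: "\<And>i. i \<in> I \<Longrightarrow> 0 \<le> w i"
    and E0: "\<And>i v. v \<in> {0<..<1} \<Longrightarrow> 0 \<le> E i v"
  shows "(\<integral>\<^sup>+v. ennreal (indicator {0<..<1} v * H v * (\<Sum>i\<in>I. w i * E i v)) \<partial>lborel)
       = (\<Sum>i\<in>I. ennreal (w i) * (\<integral>\<^sup>+v. ennreal (indicator {0<..<1} v * H v * E i v) \<partial>lborel))"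
proof -
  have "(\<integral>\<^sup>+v. ennreal (indicator {0<..<1} v * H v * (\<Sum>i\<in>I. w i * E i v)) \<partial>lborel)
      = (\<integral>\<^sup>+v. (\<Sum>i\<in>I. ennreal (w i) * ennreal (indicator {0<..<1} v * H v * E i v)) \<partial>lborel)"
  proof (intro nn_integral_cong)
    fix v :: real
    have nn: "i \<in> I \<Longrightarrow> 0 \<le> indicator {0<..<1} v * H v * E i v" for i
      using H0 E0 by (auto simp: indicator_def)
    have "(\<Sum>i\<in>I. ennreal (w i) * ennreal (indicator {0<..<1} v * H v * E i v))
        = (\<Sum>i\<in>I. ennreal (w i * (indicator {0<..<1} v * H v * E i v)))"
      using w0 by (intro sum.cong) (auto simp: ennreal_mult')
    also have "\<dots> = ennreal (\<Sum>i\<in>I. w i * (indicator {0<..<1} v * H v * E i v))"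
      using w0 nn by (intro sum_ennreal) auto
    also have "(\<Sum>i\<in>I. w i * (indicator {0<..<1} v * H v * E i v)) = indicator {0<..<1} v * H v * (\<Sum>i\<in>I. w i * E i v)"
      by (simp add: sum_distrib_left mult_ac)
    finally show "ennreal (indicator {0<..<1} v * H v * (\<Sum>i\<in>I. w i * E i v)) =
        (\<Sum>i\<in>I. ennreal (w i) * ennreal (indicator {0<..<1} v * H v * E i v))" by simp
  qed
  also have "\<dots> = (\<Sum>i\<in>I. (\<integral>\<^sup>+v. ennreal (w i) * ennreal (indicator {0<..<1} v * H v * E i v) \<partial>lborel))"
    using m Em by (intro nn_integral_sum) auto
  also have "\<dots> = (\<Sum>i\<in>I. ennreal (w i) * (\<integral>\<^sup>+v. ennreal (indicator {0<..<1} v * H v * E i v) \<partial>lborel))"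
    using m Em by (intro sum.cong refl nn_integral_cmult) auto
  finally show ?thesis .
qed

lemma M_fin:
  assumes nx: "nice FX" and ny: "nice FY"
    and mx: "integrable (interval_measure FX) (\<lambda>x. x\<^sup>2)" and my: "integrable (interval_measure FY) (\<lambda>x. x\<^sup>2)"
  shows "(\<integral>\<^sup>+v. ennreal (indicator {0<..<1} v * (qinv FX v - qinv FY v)\<^sup>2) \<partial>lborel) < \<infinity>"
proof -
  define Q1 where "Q1 u = (if u \<in> {0<..<1} then qinv FX u else 0)" for u
  define Q2 where "Q2 u = (if u \<in> {0<..<1} then qinv FY u else 0)" for u
  have [measurable]: "Q1 \<in> borel_measurable borel" "Q2 \<in> borel_measurable borel"
    unfolding Q1_def Q2_def using nice_qinv_measurable nx ny by auto
  have "(\<integral>\<^sup>+v. ennreal (indicator {0<..<1} v * (qinv FX v - qinv FY v)\<^sup>2) \<partial>lborel)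
     \<le> (\<integral>\<^sup>+v. 2 * ennreal (indicator {0<..<1} v * (Q1 v)\<^sup>2) + 2 * ennreal (indicator {0<..<1} v * (Q2 v)\<^sup>2) \<partial>lborel)"
  proof (intro nn_integral_mono)
    fix v :: real
    have "(qinv FX v - qinv FY v)\<^sup>2 \<le> 2 * (qinv FX v)\<^sup>2 + 2 * (qinv FY v)\<^sup>2"
      using sum_squares_ge_zero[of "qinv FX v + qinv FY v" 0] by (simp add: power2_eq_square algebra_simps)
    hence "indicator {0<..<1} v * (qinv FX v - qinv FY v)\<^sup>2 \<le>
           2 * (indicator {0<..<1} v * (Q1 v)\<^sup>2) + 2 * (indicator {0<..<1} v * (Q2 v)\<^sup>2)"
      by (auto simp: indicator_def Q1_def Q2_def)
    hence "ennreal (indicator {0<..<1} v * (qinv FX v - qinv FY v)\<^sup>2) \<le>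
           ennreal (2 * (indicator {0<..<1} v * (Q1 v)\<^sup>2) + 2 * (indicator {0<..<1} v * (Q2 v)\<^sup>2))"
      by (rule ennreal_leI)
    thus "ennreal (indicator {0<..<1} v * (qinv FX v - qinv FY v)\<^sup>2) \<le>
          2 * ennreal (indicator {0<..<1} v * (Q1 v)\<^sup>2) + 2 * ennreal (indicator {0<..<1} v * (Q2 v)\<^sup>2)"
      by (simp add: ennreal_plus ennreal_mult)
  qed
  also have "\<dots> = 2 * (\<integral>\<^sup>+v. ennreal (indicator {0<..<1} v * (Q1 v)\<^sup>2) \<partial>lborel)
                 + 2 * (\<integral>\<^sup>+v. ennreal (indicator {0<..<1} v * (Q2 v)\<^sup>2) \<partial>lborel)"
    by (simp add: nn_integral_add nn_integral_cmult)
  also have "(\<integral>\<^sup>+v. ennreal (indicator {0<..<1} v * (Q1 v)\<^sup>2) \<partial>lborel)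
           = (\<integral>\<^sup>+v. ennreal (indicator {0<..<1} v * (qinv FX v)\<^sup>2) \<partial>lborel)"
    by (intro nn_integral_cong) (auto simp: Q1_def indicator_def)
  also have "(\<integral>\<^sup>+v. ennreal (indicator {0<..<1} v * (Q2 v)\<^sup>2) \<partial>lborel)
           = (\<integral>\<^sup>+v. ennreal (indicator {0<..<1} v * (qinv FY v)\<^sup>2) \<partial>lborel)"
    by (intro nn_integral_cong) (auto simp: Q2_def indicator_def)
  also have "2 * (\<integral>\<^sup>+v. ennreal (indicator {0<..<1} v * (qinv FX v)\<^sup>2) \<partial>lborel)
           + 2 * (\<integral>\<^sup>+v. ennreal (indicator {0<..<1} v * (qinv FY v)\<^sup>2) \<partial>lborel) < \<infinity>"
    using nice_moment[OF nx mx] nice_moment[OF ny my] by (simp add: ennreal_mult_less_top)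
  finally show ?thesis .
qed



theorem theorem5p4:
  fixes p :: nat
    and \<gamma> :: "nat \<Rightarrow> real" and \<alpha> :: "nat \<Rightarrow> real"
    and \<gamma>n :: "nat \<Rightarrow> nat \<Rightarrow> real"
    and \<delta> :: "nat \<Rightarrow> real"
    and FX FY :: "real \<Rightarrow> real"
    and \<phi> :: "nat \<Rightarrow> real \<Rightarrow> real"
  assumes gamma_range: "\<forall>i\<in>{1..p}. 0 \<le> \<gamma> i \<and> \<gamma> i \<le> 1"
    and gamma_incr: "\<forall>i\<in>{1..p}. \<forall>j\<in>{1..p}. i < j \<longrightarrow> \<gamma> i < \<gamma> j"
    and alpha_range: "\<forall>i\<in>{1..p}. 0 < \<alpha> i \<and> \<alpha> i < 1"
    and alpha_sum: "(\<Sum>i=1..p. \<alpha> i) = 1"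
    and gamma_n_range: "\<forall>i\<in>{1..p}. \<forall>n. 0 \<le> \<gamma>n i n \<and> \<gamma>n i n \<le> 1"
    and gamma_n_rate: "\<forall>i\<in>{1..p}. (\<lambda>n. \<gamma>n i n - \<gamma> i) \<in> O(\<lambda>n. 1 / real n)"
    and phi_def: "\<forall>n u. \<phi> n u = (\<Sum>i=1..p. \<alpha> i * phi n (\<gamma>n i n) u)"
    and FX_cdf: "is_cdf FX" and FY_cdf: "is_cdf FY"
    and FX_cont: "continuous_on UNIV FX" and FY_cont: "continuous_on UNIV FY"
    and FX_strict: "strict_mono FX" and FY_strict: "strict_mono FY"
    and FX_mom: "integrable (interval_measure FX) (\<lambda>x. x\<^sup>2)"
    and FY_mom: "integrable (interval_measure FY) (\<lambda>x. x\<^sup>2)"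
    and delta_pos: "\<forall>i\<in>{1..p}. 0 < \<delta> i"
    and delta_disj: "\<forall>i\<in>{1..p}. \<forall>j\<in>{1..p}. i \<noteq> j \<longrightarrow>
        {\<gamma> i - \<delta> i <..< \<gamma> i + \<delta> i} \<inter> {0..1} \<inter>
        ({\<gamma> j - \<delta> j <..< \<gamma> j + \<delta> j} \<inter> {0..1}) = {}"
    and deriv_ratio: "\<forall>i\<in>{1..p}. \<forall>a b. a \<in> {0..1} \<and> b \<in> {0..1} \<and>
        ((\<gamma> i - \<delta> i \<le> a \<and> a < b \<and> b < \<gamma> i) \<or>
         (\<gamma> i < b \<and> b < a \<and> a \<le> \<gamma> i + \<delta> i)) \<longrightarrow>
        ((\<lambda>n. deriv (\<phi> n) a / deriv (\<phi> n) b) \<longlongrightarrow> 0) sequentially"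
    and A1: "\<forall>i\<in>{1..p}. A2set FX FY \<inter> {0<..<\<gamma> i} \<noteq> {} \<longrightarrow>
        max (Fext FX (c_pt FX FY (\<gamma> i))) (\<gamma> i - \<delta> i) < Fext FX (a_pt FX FY (\<gamma> i))"
    and A2: "\<forall>i\<in>{1..p}. A2set FX FY \<inter> {\<gamma> i<..<1} \<noteq> {} \<longrightarrow>
        Fext FX (b_pt FX FY (\<gamma> i)) < min (Fext FX (d_pt FX FY (\<gamma> i))) (\<gamma> i + \<delta> i)"
  shows "((\<lambda>n. epsW2 (\<phi> n \<circ> FX) (\<phi> n \<circ> FY)) \<longlongrightarrow> 0) sequentially"
proof -
  have nx: "nice FX" using FX_cont FX_strict FX_cdf unfolding nice_def is_cdf_def by auto
  have ny: "nice FY" using FY_cont FY_strict FY_cdf unfolding nice_def is_cdf_def by auto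
  have p1: "1 \<le> p" using alpha_sum by (cases p) auto
  define P where "P i n = kk n (\<gamma>n i n) - 1" for i n
  define Q where "Q i n = n - kk n (\<gamma>n i n)" for i n
  define w where "w i n = \<alpha> i * (real n * real ((n - 1) choose (kk n (\<gamma>n i n) - 1)))" for i n
  define dpsi where "dpsi n t = (\<Sum>i=1..p. \<alpha> i * dphi n (\<gamma>n i n) t)" for n t
  have dpsi_eq: "dpsi n t = (\<Sum>i=1..p. w i n * EE (P i n) (Q i n) t)" for n t
    unfolding dpsi_def w_def P_def Q_def dphi_def by (simp add: mult.assoc)
  have w0: "0 \<le> w i n" if i: "i \<in> {1..p}" for i n
  proof -
    have "0 < \<alpha> i" using bspec[OF alpha_range i] by simp
    thus ?thesis unfolding w_def by simp
  qed
  have phi_fun: "\<phi> n = (\<lambda>u. \<Sum>i=1..p. \<alpha> i * phi n (\<gamma>n i n) u)" for n using phi_def by auto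
  have Mfin: "(\<integral>\<^sup>+v. ennreal (indicator {0<..<1} v * (qinv FX v - qinv FY v)\<^sup>2) \<partial>lborel) < \<infinity>"
    by (rule M_fin[OF nx ny FX_mom FY_mom])
  have comp: "\<forall>i\<in>{1..p}. \<exists>\<rho>. (\<rho> \<longlongrightarrow> 0) sequentially \<and> (\<forall>n. 0 \<le> \<rho> n) \<and> eventually (\<lambda>n.
     (\<integral>\<^sup>+v. ennreal (indicator {0<..<1} v * (max (qinv FX v - qinv FY v) 0)\<^sup>2 * EE (P i n) (Q i n) v) \<partial>lborel)
     \<le> ennreal (\<rho> n) * (\<integral>\<^sup>+v. ennreal (indicator {0<..<1} v * (qinv FX v - qinv FY v)\<^sup>2 * EE (P i n) (Q i n) v) \<partial>lborel))
     sequentially"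
  proof
    fix i assume i: "i \<in> {1..p}"
    have lim: "((\<lambda>n. \<gamma>n i n) \<longlongrightarrow> \<gamma> i) sequentially"
    proof -
      have "((\<lambda>n. \<gamma>n i n - \<gamma> i) \<longlongrightarrow> 0) sequentially"
        using gamma_n_rate i by (intro bigo_to_tendsto) auto
      hence "((\<lambda>n. (\<gamma>n i n - \<gamma> i) + \<gamma> i) \<longlongrightarrow> 0 + \<gamma> i) sequentially" by (intro tendsto_add) auto
      thus ?thesis by simp
    qed
    have rng: "\<forall>n. 0 \<le> \<gamma>n i n \<and> \<gamma>n i n \<le> 1" using gamma_n_range i by auto
    note kl = kap_lemma[OF lim rng]
    show "\<exists>\<rho>. (\<rho> \<longlongrightarrow> 0) sequentially \<and> (\<forall>n. 0 \<le> \<rho> n) \<and> eventually (\<lambda>n.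
     (\<integral>\<^sup>+v. ennreal (indicator {0<..<1} v * (max (qinv FX v - qinv FY v) 0)\<^sup>2 * EE (P i n) (Q i n) v) \<partial>lborel)
     \<le> ennreal (\<rho> n) * (\<integral>\<^sup>+v. ennreal (indicator {0<..<1} v * (qinv FX v - qinv FY v)\<^sup>2 * EE (P i n) (Q i n) v) \<partial>lborel))
     sequentially"
      unfolding P_def Q_def
      by (rule component[OF nx ny _ _ _ _ Mfin kl(1) kl(2)])
         (use gamma_range A1 A2 i in auto)
  qed
  then obtain R where R: "\<forall>i\<in>{1..p}. (R i \<longlongrightarrow> 0) sequentially \<and> (\<forall>n. 0 \<le> R i n) \<and> eventually (\<lambda>n.
     (\<integral>\<^sup>+v. ennreal (indicator {0<..<1} v * (max (qinv FX v - qinv FY v) 0)\<^sup>2 * EE (P i n) (Q i n) v) \<partial>lborel)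
     \<le> ennreal (R i n) * (\<integral>\<^sup>+v. ennreal (indicator {0<..<1} v * (qinv FX v - qinv FY v)\<^sup>2 * EE (P i n) (Q i n) v) \<partial>lborel))
     sequentially"
    using bchoice[OF comp] by (elim exE) blast
  have evall: "eventually (\<lambda>n. \<forall>i\<in>{1..p}.
     (\<integral>\<^sup>+v. ennreal (indicator {0<..<1} v * (max (qinv FX v - qinv FY v) 0)\<^sup>2 * EE (P i n) (Q i n) v) \<partial>lborel)
     \<le> ennreal (R i n) * (\<integral>\<^sup>+v. ennreal (indicator {0<..<1} v * (qinv FX v - qinv FY v)\<^sup>2 * EE (P i n) (Q i n) v) \<partial>lborel))
     sequentially"
    using R by (intro eventually_ball_finite) auto
  have Rlim: "((\<lambda>n. \<Sum>i=1..p. R i n) \<longlongrightarrow> 0) sequentially"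
    using R by (intro tendsto_null_sum) auto
  have R0: "0 \<le> R i n" if "i \<in> {1..p}" for i n using R that by auto
  have main: "eventually (\<lambda>n. 0 \<le> epsW2 (\<phi> n \<circ> FX) (\<phi> n \<circ> FY) \<and>
       epsW2 (\<phi> n \<circ> FX) (\<phi> n \<circ> FY) \<le> (\<Sum>i=1..p. R i n)) sequentially"
    using evall eventually_ge_at_top[of "1::nat"]
  proof eventually_elim
    case (elim n)
    have n1: "1 \<le> n" using elim by simp
    have rng: "0 \<le> \<gamma>n i n" "\<gamma>n i n \<le> 1" if "i \<in> {1..p}" for i using gamma_n_range that by auto
    have d: "(\<phi> n has_real_derivative dpsi n t) (at t)" for t
      unfolding phi_fun dpsi_def
      by (intro DERIV_sum DERIV_cmult phi_deriv rng n1) auto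
    have c': "continuous_on UNIV (dpsi n)"
      unfolding dpsi_def by (intro continuous_on_sum continuous_on_mult continuous_on_const dphi_cont)
    have pos: "0 < dpsi n t" if "0 < t" "t < 1" for t
      unfolding dpsi_def
    proof (rule sum_pos)
      show "finite {1..p}" by simp
      show "{1..p} \<noteq> {}" using p1 by simp
      fix i assume i: "i \<in> {1..p}"
      show "0 < \<alpha> i * dphi n (\<gamma>n i n) t"
        using alpha_range i dphi_pos[OF rng(1)[OF i] rng(2)[OF i] n1 that] by auto
    qed
    have p0: "\<phi> n 0 = 0" unfolding phi_fun using phi_0[OF _ _ n1] rng by simp
    have p1': "\<phi> n 1 = 1" unfolding phi_fun using phi_1[OF _ _ n1] rng alpha_sum by simp
    note S = subst_main[OF d c' pos p0 p1' nx ny]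
    have ST: "(\<integral>\<^sup>+u. ennreal (indicator {0<..<1} u * (qinv (\<phi> n \<circ> FX) u - qinv (\<phi> n \<circ> FY) u)\<^sup>2) \<partial>lborel)
       = (\<integral>\<^sup>+v. ennreal (indicator {0<..<1} v * (qinv FX v - qinv FY v)\<^sup>2 * dpsi n v) \<partial>lborel)"
      using S[of "\<lambda>x. x\<^sup>2"] by (simp add: continuous_intros)
    have SP: "(\<integral>\<^sup>+u. ennreal (indicator {0<..<1} u * (max (qinv (\<phi> n \<circ> FX) u - qinv (\<phi> n \<circ> FY) u) 0)\<^sup>2) \<partial>lborel)
       = (\<integral>\<^sup>+v. ennreal (indicator {0<..<1} v * (max (qinv FX v - qinv FY v) 0)\<^sup>2 * dpsi n v) \<partial>lborel)"
      using S[of "\<lambda>x. (max x 0)\<^sup>2"] by (simp add: continuous_intros)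
    have EEm: "\<And>i. EE (P i n) (Q i n) \<in> borel_measurable borel" by simp
    have EE0: "\<And>i v. v \<in> {0<..<1} \<Longrightarrow> 0 \<le> EE (P i n) (Q i n) v" by (auto intro: EE_nonneg)
    have DT: "(\<integral>\<^sup>+v. ennreal (indicator {0<..<1} v * (qinv FX v - qinv FY v)\<^sup>2 * dpsi n v) \<partial>lborel)
      = (\<Sum>i=1..p. ennreal (w i n) * (\<integral>\<^sup>+v. ennreal (indicator {0<..<1} v * (qinv FX v - qinv FY v)\<^sup>2 * EE (P i n) (Q i n) v) \<partial>lborel))"
      unfolding dpsi_eq
      by (rule decomp[where H = "\<lambda>v. (qinv FX v - qinv FY v)\<^sup>2", OF _ EEm _ w0 EE0])
         (auto intro!: meas_h[OF nx ny, of "\<lambda>x. x\<^sup>2", simplified] continuous_intros)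
    have DP: "(\<integral>\<^sup>+v. ennreal (indicator {0<..<1} v * (max (qinv FX v - qinv FY v) 0)\<^sup>2 * dpsi n v) \<partial>lborel)
      = (\<Sum>i=1..p. ennreal (w i n) * (\<integral>\<^sup>+v. ennreal (indicator {0<..<1} v * (max (qinv FX v - qinv FY v) 0)\<^sup>2 * EE (P i n) (Q i n) v) \<partial>lborel))"
      unfolding dpsi_eq
      by (rule decomp[where H = "\<lambda>v. (max (qinv FX v - qinv FY v) 0)\<^sup>2", OF _ EEm _ w0 EE0])
         (auto intro!: meas_h[OF nx ny, of "\<lambda>x. (max x 0)\<^sup>2", simplified] continuous_intros)
    define Rs where "Rs = (\<Sum>i=1..p. R i n)"
    have Rs0: "0 \<le> Rs" unfolding Rs_def using R0 by (intro sum_nonneg) auto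
    have RleRs: "R i n \<le> Rs" if "i \<in> {1..p}" for i
      unfolding Rs_def using R0 that by (intro member_le_sum) auto
    have bound: "(\<integral>\<^sup>+u. ennreal (indicator {0<..<1} u * (max (qinv (\<phi> n \<circ> FX) u - qinv (\<phi> n \<circ> FY) u) 0)\<^sup>2) \<partial>lborel)
       \<le> ennreal Rs * (\<integral>\<^sup>+u. ennreal (indicator {0<..<1} u * (qinv (\<phi> n \<circ> FX) u - qinv (\<phi> n \<circ> FY) u)\<^sup>2) \<partial>lborel)"
      unfolding SP ST DP DT sum_distrib_left
    proof (rule sum_mono)
      fix i assume i: "i \<in> {1..p}"
      have "ennreal (w i n) * (\<integral>\<^sup>+v. ennreal (indicator {0<..<1} v * (max (qinv FX v - qinv FY v) 0)\<^sup>2 * EE (P i n) (Q i n) v) \<partial>lborel)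
         \<le> ennreal (w i n) * (ennreal (R i n) * (\<integral>\<^sup>+v. ennreal (indicator {0<..<1} v * (qinv FX v - qinv FY v)\<^sup>2 * EE (P i n) (Q i n) v) \<partial>lborel))"
        using elim(1) i by (intro mult_left_mono) auto
      also have "\<dots> \<le> ennreal (w i n) * (ennreal Rs * (\<integral>\<^sup>+v. ennreal (indicator {0<..<1} v * (qinv FX v - qinv FY v)\<^sup>2 * EE (P i n) (Q i n) v) \<partial>lborel))"
        using RleRs[OF i] by (intro mult_left_mono mult_right_mono ennreal_leI) auto
      finally show "ennreal (w i n) * (\<integral>\<^sup>+v. ennreal (indicator {0<..<1} v * (max (qinv FX v - qinv FY v) 0)\<^sup>2 * EE (P i n) (Q i n) v) \<partial>lborel)
         \<le> ennreal Rs * (ennreal (w i n) * (\<integral>\<^sup>+v. ennreal (indicator {0<..<1} v * (qinv FX v - qinv FY v)\<^sup>2 * EE (P i n) (Q i n) v) \<partial>lborel))"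
        by (simp add: mult_ac)
    qed
    have ng1: "nice (\<phi> n \<circ> FX)" and ng2: "nice (\<phi> n \<circ> FY)"
      using psi_nice[OF d pos p0 p1'] nx ny by auto
    show ?case using eps_bound[OF ng1 ng2 Rs0 bound] unfolding Rs_def .
  qed
  show ?thesis
    by (rule tendsto_sandwich[OF _ _ tendsto_const Rlim]) (use main in \<open>auto elim: eventually_mono\<close>)
qed

end
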